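(* If $L$ is a lattice, then there is a natural bijection between marked reflection structures on $L$ and root systems in $L$.
   Context: A lattice is a free abelian group of finite rank. A reflection on $L$ is an automorphism conjugate in $\mathrm{Aut}(\mathbb{Q}\otimes L)\cong GL(r,\mathbb{Q})$ to $\mathrm{diag}(-1,1,\dots,1)$. A strict marking for a reflection $\sigma$ is a pair $(b,\beta)$ with $b\in L$ and $\beta:L\to\mathbb{Z}$ a homomorphism such that $\sigma(x)=x+\beta(x)b$ for all $x\in L$; a marking is an equivalence class $\pm(b,\beta)$ of strict markings up to sign. For $w\in\mathrm{Aut}(L)$, $w\cdot(b,\beta)=(w(b),\beta\circ w^{-1})$, a marking for $w\sigma w^{-1}$. A marked reflection structure on $L$ is a finite subgroup $W\subset\mathrm{Aut}(L)$ generated by the reflections it contains, together with a marking $\pm(b_\sigma,\beta_\sigma)$ for each reflection $\sigma\in W$ such that $w\cdot(b_\sigma,\beta_\sigma)=\pm(b_{w\sigma w^{-1}},\beta_{w\sigma w^{-1}})$ for all $w\in W$. A root system in $L$ is a finite subset $R\subset L$ together with, for each $r\in R$, a homomorphism $n_r:L\to\mathbb{Z}$, such that: (R1) $R$ and $\bigcap_r\ker(n_r)$ together span $\mathbb{Q}\otimes L$; (R2) $n_r(r)=-2$; (R3) if $r\in R$, $k\in\mathbb{Z}$ and $kr\in R$ then $k=\pm1$; (R4) if $r,t\in R$ then $t+n_r(t)r\in R$. *)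

theory Defs
  imports "HOL-Analysis.Analysis"
begin

text \<open>The lattice L is modelled as int^'n (rank CARD('n)); Q (x) L as rat^'n.\<close>

type_synonym 'n lat = "int ^ 'n"
type_synonym 'n dual = "int ^ 'n \<Rightarrow> int"

definition hom_Z :: "('n::finite) dual \<Rightarrow> bool" where
  "hom_Z \<beta> \<longleftrightarrow> (\<forall>x y. \<beta> (x + y) = \<beta> x + \<beta> y)"

definition Aut :: "(('n::finite) lat \<Rightarrow> 'n lat) set" where
  "Aut = {\<sigma>. bij \<sigma> \<and> (\<forall>x y. \<sigma> (x + y) = \<sigma> x + \<sigma> y)}"

definition toQ :: "('n::finite) lat \<Rightarrow> rat ^ 'n" where
  "toQ x = (\<chi> i. of_int (x $ i))"

definition qmat :: "(('n::finite) lat \<Rightarrow> 'n lat) \<Rightarrow> rat ^ 'n ^ 'n" where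
  "qmat \<sigma> = (\<chi> i j. of_int ((\<sigma> (axis j 1)) $ i))"

definition diag_refl :: "'n::finite \<Rightarrow> rat ^ 'n ^ 'n" where
  "diag_refl k = (\<chi> i j. if i = j then (if i = k then -1 else 1) else 0)"

definition reflection :: "(('n::finite) lat \<Rightarrow> 'n lat) \<Rightarrow> bool" where
  "reflection \<sigma> \<longleftrightarrow> \<sigma> \<in> Aut \<and>
     (\<exists>(P :: rat ^ 'n ^ 'n) (Q :: rat ^ 'n ^ 'n) k. P ** Q = mat 1 \<and> Q ** P = mat 1 \<and> P ** qmat \<sigma> ** Q = diag_refl k)"

definition strict_marking :: "(('n::finite) lat \<Rightarrow> 'n lat) \<Rightarrow> 'n lat \<Rightarrow> 'n dual \<Rightarrow> bool" where
  "strict_marking \<sigma> b \<beta> \<longleftrightarrow> hom_Z \<beta> \<and> (\<forall>x. \<sigma> x = x + \<beta> x *s b)"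

definition pm :: "('n::finite) lat \<Rightarrow> 'n dual \<Rightarrow> ('n lat \<times> 'n dual) set" where
  "pm b \<beta> = {(b, \<beta>), (- b, \<lambda>x. - \<beta> x)}"

definition is_marking :: "(('n::finite) lat \<Rightarrow> 'n lat) \<Rightarrow> ('n lat \<times> 'n dual) set \<Rightarrow> bool" where
  "is_marking \<sigma> M \<longleftrightarrow> (\<exists>b \<beta>. strict_marking \<sigma> b \<beta> \<and> M = pm b \<beta>)"

definition act_marking :: "(('n::finite) lat \<Rightarrow> 'n lat) \<Rightarrow> ('n lat \<times> 'n dual) set \<Rightarrow> ('n lat \<times> 'n dual) set" where
  "act_marking w M = (\<lambda>(b, \<beta>). (w b, \<beta> \<circ> inv w)) ` M"

definition gen_group :: "(('n::finite) lat \<Rightarrow> 'n lat) set \<Rightarrow> ('n lat \<Rightarrow> 'n lat) set" where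
  "gen_group S = \<Inter> {H. id \<in> H \<and> S \<subseteq> H \<and> (\<forall>f\<in>H. \<forall>g\<in>H. f \<circ> g \<in> H) \<and> (\<forall>f\<in>H. inv f \<in> H)}"

definition is_subgroup_Aut :: "(('n::finite) lat \<Rightarrow> 'n lat) set \<Rightarrow> bool" where
  "is_subgroup_Aut W \<longleftrightarrow> W \<subseteq> Aut \<and> id \<in> W \<and> (\<forall>f\<in>W. \<forall>g\<in>W. f \<circ> g \<in> W) \<and> (\<forall>f\<in>W. inv f \<in> W)"

text \<open>A marked reflection structure (W, m); m assigns to each reflection of W its marking
  (and, as a normalisation, the empty set to all other maps).\<close>
definition marked_reflection_structure ::
  "(('n::finite) lat \<Rightarrow> 'n lat) set \<Rightarrow> (('n lat \<Rightarrow> 'n lat) \<Rightarrow> ('n lat \<times> 'n dual) set) \<Rightarrow> bool" where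
  "marked_reflection_structure W m \<longleftrightarrow>
     finite W \<and> is_subgroup_Aut W \<and> W = gen_group {\<sigma>\<in>W. reflection \<sigma>} \<and>
     (\<forall>\<sigma>. \<sigma> \<in> W \<and> reflection \<sigma> \<longrightarrow> is_marking \<sigma> (m \<sigma>)) \<and>
     (\<forall>\<sigma>. \<not> (\<sigma> \<in> W \<and> reflection \<sigma>) \<longrightarrow> m \<sigma> = {}) \<and>
     (\<forall>w\<in>W. \<forall>\<sigma>\<in>W. reflection \<sigma> \<longrightarrow> act_marking w (m \<sigma>) = m (w \<circ> \<sigma> \<circ> inv w))"

text \<open>A root system (R, n) in L; n is normalised to 0 off R.\<close>
definition root_system :: "('n::finite) lat set \<Rightarrow> ('n lat \<Rightarrow> 'n dual) \<Rightarrow> bool" where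
  "root_system R n \<longleftrightarrow>
     finite R \<and> (\<forall>r\<in>R. hom_Z (n r)) \<and> (\<forall>r. r \<notin> R \<longrightarrow> n r = (\<lambda>_. 0)) \<and>
     vec.span (toQ ` (R \<union> (\<Inter>r\<in>R. {x. n r x = 0}))) = UNIV \<and>
     (\<forall>r\<in>R. n r r = -2) \<and>
     (\<forall>r\<in>R. \<forall>k::int. k *s r \<in> R \<longrightarrow> k = 1 \<or> k = -1) \<and>
     (\<forall>r\<in>R. \<forall>t\<in>R. t + n r t *s r \<in> R)"

definition root_refl :: "('n::finite) lat \<Rightarrow> 'n dual \<Rightarrow> 'n lat \<Rightarrow> 'n lat" where
  "root_refl r \<beta> = (\<lambda>x. x + \<beta> x *s r)"

definition rs_to_mrs :: "('n::finite) lat set \<times> ('n lat \<Rightarrow> 'n dual) \<Rightarrow>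
    ('n lat \<Rightarrow> 'n lat) set \<times> (('n lat \<Rightarrow> 'n lat) \<Rightarrow> ('n lat \<times> 'n dual) set)" where
  "rs_to_mrs Rn = (let R = fst Rn; n = snd Rn;
                       W = gen_group ((\<lambda>r. root_refl r (n r)) ` R)
     in (W, \<lambda>\<sigma>. if \<sigma> \<in> W \<and> reflection \<sigma>
                 then (\<Union>r\<in>{r\<in>R. root_refl r (n r) = \<sigma>}. pm r (n r)) else {}))"

end

theory Submission
  imports Defs
begin

definition addv :: "(('n::finite) lat \<Rightarrow> 'n lat) \<Rightarrow> bool" where
  "addv f \<longleftrightarrow> (\<forall>x y. f (x + y) = f x + f y)"

lemma addv_0: "addv f \<Longrightarrow> f 0 = 0"
  unfolding addv_def by (metis add_cancel_right_right add_0)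

lemma addv_neg: "addv f \<Longrightarrow> f (- x) = - f x"
  using addv_0[of f] unfolding addv_def
  by (metis add.right_inverse eq_neg_iff_add_eq_0)

lemma addv_diff: "addv f \<Longrightarrow> f (x - y) = f x - f y"
  using addv_neg[of f y] unfolding addv_def
  by (metis diff_conv_add_uminus)

lemma addv_add: "addv f \<Longrightarrow> f (x + y) = f x + f y"
  unfolding addv_def by blast

lemma addv_smult_nat: "addv f \<Longrightarrow> f (int k *s x) = int k *s f x"
proof (induction k)
  case 0
  then show ?case using addv_0[of f] by (simp add: vec_eq_iff)
next
  case (Suc k)
  have e: "int (Suc k) *s x = x + int k *s x" for x :: "'a lat"
    by (simp add: vec_eq_iff algebra_simps)
  show ?case using Suc by (simp add: e addv_add)
qed

lemma addv_smult: assumes a: "addv f" shows "f (k *s x) = k *s f x"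
proof (cases k rule: int_cases)
  case (nonneg m)
  then show ?thesis using addv_smult_nat a by blast
next
  case (neg m)
  have e: "k *s x = - (int (Suc m) *s x)" for x :: "'a lat"
    using neg by (simp add: vec_eq_iff)
  have "f (k *s x) = - f (int (Suc m) *s x)" by (simp only: e addv_neg[OF a])
  also have "\<dots> = - (int (Suc m) *s f x)" by (simp only: addv_smult_nat[OF a])
  also have "\<dots> = k *s f x" using neg by (simp add: vec_eq_iff)
  finally show ?thesis .
qed

lemma addv_sum: "addv f \<Longrightarrow> f (sum g A) = sum (\<lambda>a. f (g a)) A"
proof (induction A rule: infinite_finite_induct)
  case (infinite A)
  then show ?case using addv_0[of f] by simp
next
  case empty
  then show ?case using addv_0[of f] by simp
next
  case (insert x F)
  then show ?case by (simp add: addv_add)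
qed

lemma addv_comp: "addv f \<Longrightarrow> addv g \<Longrightarrow> addv (f \<circ> g)"
  unfolding addv_def by simp

lemma addv_id: "addv id"
  unfolding addv_def by simp

lemma Aut_addv: "f \<in> Aut \<Longrightarrow> addv f"
  unfolding Aut_def addv_def by blast

lemma Aut_bij: "f \<in> Aut \<Longrightarrow> bij f"
  unfolding Aut_def by blast

lemma Aut_inv: assumes "f \<in> Aut" shows "inv f \<in> Aut"
proof -
  have b: "bij f" and a: "addv f" using assms Aut_bij Aut_addv by auto
  have "bij (inv f)" using b by (simp add: bij_imp_bij_inv)
  moreover have "inv f (x + y) = inv f x + inv f y" for x y
  proof -
    have "f (inv f x + inv f y) = x + y"
      using a b by (simp add: addv_add bij_inv_eq_iff surj_f_inv_f bij_is_surj)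
    then show ?thesis using b by (metis bij_inv_eq_iff)
  qed
  ultimately show ?thesis unfolding Aut_def by blast
qed

lemma Aut_comp: "f \<in> Aut \<Longrightarrow> g \<in> Aut \<Longrightarrow> f \<circ> g \<in> Aut"
  unfolding Aut_def by (auto intro: bij_comp)

lemma Aut_id: "id \<in> Aut"
  unfolding Aut_def by auto

lemma hom_Z_add: "hom_Z \<beta> \<Longrightarrow> \<beta> (x + y) = \<beta> x + \<beta> y"
  unfolding hom_Z_def by blast

lemma hom_Z_0: "hom_Z \<beta> \<Longrightarrow> \<beta> 0 = 0"
  unfolding hom_Z_def by (metis add_cancel_right_right add_0)

lemma hom_Z_neg: "hom_Z \<beta> \<Longrightarrow> \<beta> (- x) = - \<beta> x"
  using hom_Z_0[of \<beta>] unfolding hom_Z_def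
  by (metis add.right_inverse eq_neg_iff_add_eq_0)

lemma hom_Z_diff: "hom_Z \<beta> \<Longrightarrow> \<beta> (x - y) = \<beta> x - \<beta> y"
  using hom_Z_neg[of \<beta> y] unfolding hom_Z_def
  by (metis diff_conv_add_uminus)

lemma hom_Z_smult_nat: "hom_Z \<beta> \<Longrightarrow> \<beta> (int k *s x) = int k * \<beta> x"
proof (induction k)
  case 0
  then show ?case using hom_Z_0[of \<beta>] by (simp add: vec_eq_iff)
next
  case (Suc k)
  have e: "int (Suc k) *s x = x + int k *s x" for x :: "'a lat"
    by (simp add: vec_eq_iff algebra_simps)
  show ?case using Suc by (simp add: e hom_Z_add algebra_simps)
qed

lemma hom_Z_smult: assumes a: "hom_Z \<beta>" shows "\<beta> (k *s x) = k * \<beta> x"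
proof (cases k rule: int_cases)
  case (nonneg m)
  then show ?thesis using hom_Z_smult_nat a by blast
next
  case (neg m)
  have e: "k *s x = - (int (Suc m) *s x)" for x :: "'a lat"
    using neg by (simp add: vec_eq_iff)
  have "\<beta> (k *s x) = - \<beta> (int (Suc m) *s x)" by (simp only: e hom_Z_neg[OF a])
  also have "\<dots> = - (int (Suc m) * \<beta> x)" by (simp only: hom_Z_smult_nat[OF a])
  also have "\<dots> = k * \<beta> x" by (simp only: neg)
  finally show ?thesis .
qed

lemma hom_Z_sum: "hom_Z \<beta> \<Longrightarrow> \<beta> (sum g A) = sum (\<lambda>a. \<beta> (g a)) A"
proof (induction A rule: infinite_finite_induct)
  case (infinite A)
  then show ?case using hom_Z_0[of \<beta>] by simp
next
  case empty
  then show ?case using hom_Z_0[of \<beta>] by simp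
next
  case (insert x F)
  then show ?case by (simp add: hom_Z_add)
qed

lemma hom_Z_uminus: "hom_Z \<beta> \<Longrightarrow> hom_Z (\<lambda>x. - \<beta> x)"
  unfolding hom_Z_def by simp

lemma hom_Z_comp: "hom_Z \<beta> \<Longrightarrow> addv f \<Longrightarrow> hom_Z (\<beta> \<circ> f)"
  unfolding hom_Z_def addv_def by simp

definition dotq :: "rat ^ 'n::finite \<Rightarrow> rat ^ 'n \<Rightarrow> rat" where
  "dotq u v = (\<Sum>i\<in>UNIV. u $ i * v $ i)"

lemma dotq_add[simp]: "dotq u (x + y) = dotq u x + dotq u y"
  by (simp add: dotq_def sum.distrib algebra_simps)
lemma dotq_diff[simp]: "dotq u (x - y) = dotq u x - dotq u y"
  by (simp add: dotq_def sum_subtractf algebra_simps)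
lemma dotq_neg[simp]: "dotq u (- x) = - dotq u x"
  by (simp add: dotq_def sum_negf)
lemma dotq_smult[simp]: "dotq u (c *s x) = c * dotq u x"
  by (simp add: dotq_def sum_distrib_left algebra_simps)
lemma dotq_zero[simp]: "dotq u 0 = 0"
  by (simp add: dotq_def)
lemma dotq_axis[simp]: "dotq u (axis k 1) = u $ k"
  by (simp add: dotq_def axis_def if_distrib cong: if_cong)
lemma dotq_lsmult[simp]: "dotq (c *s u) x = c * dotq u x"
  by (simp add: dotq_def sum_distrib_left algebra_simps)

lemma dotq_lneg[simp]: "dotq (- u) x = - dotq u x"
  by (simp add: dotq_def sum_negf)
lemma dotq_ladd[simp]: "dotq (u + v) x = dotq u x + dotq v x"
  by (simp add: dotq_def sum.distrib algebra_simps)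

lemma toQ_nth[simp]: "toQ x $ i = of_int (x $ i)"
  by (simp add: toQ_def)
lemma toQ_add[simp]: "toQ (x + y) = toQ x + toQ y"
  by (simp add: vec_eq_iff)
lemma toQ_diff[simp]: "toQ (x - y) = toQ x - toQ y"
  by (simp add: vec_eq_iff)
lemma toQ_neg[simp]: "toQ (- x) = - toQ x"
  by (simp add: vec_eq_iff)
lemma toQ_zero[simp]: "toQ 0 = 0"
  by (simp add: vec_eq_iff)
lemma toQ_smult[simp]: "toQ (k *s x) = of_int k *s toQ x"
  by (simp add: vec_eq_iff)
lemma toQ_axis[simp]: "toQ (axis j 1) = axis j 1"
  by (simp add: vec_eq_iff axis_def)
lemma toQ_inj: "toQ x = toQ y \<longleftrightarrow> x = y"
  by (simp add: vec_eq_iff)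
lemma toQ_sum: "toQ (sum g A) = sum (\<lambda>a. toQ (g a)) A"
  by (induction A rule: infinite_finite_induct) auto

definition bv :: "('n::finite) dual \<Rightarrow> rat ^ 'n" where
  "bv \<beta> = (\<chi> j. of_int (\<beta> (axis j 1)))"

lemma lat_expand: "x = (\<Sum>j\<in>UNIV. (x $ j) *s axis j (1::int))"
  by (simp add: basis_expansion)

lemma hom_Z_bv: assumes "hom_Z \<beta>" shows "of_int (\<beta> x) = dotq (bv \<beta>) (toQ x)"
proof -
  have "\<beta> x = (\<Sum>j\<in>UNIV. x $ j * \<beta> (axis j 1))"
    by (subst lat_expand) (simp add: hom_Z_sum[OF assms] hom_Z_smult[OF assms])
  then show ?thesis by (simp add: dotq_def bv_def mult.commute)
qed

lemma addv_expand: assumes "addv f"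
  shows "f x = (\<Sum>j\<in>UNIV. (x $ j) *s f (axis j 1))"
  by (subst lat_expand) (simp add: addv_sum[OF assms] addv_smult[OF assms])

lemma qmat_vec: assumes "addv f" shows "qmat f *v toQ x = toQ (f x)"
proof -
  have "f x $ i = (\<Sum>j\<in>UNIV. x $ j * f (axis j 1) $ i)" for i
    by (subst addv_expand[OF assms]) (simp add: sum_component)
  then show ?thesis
    by (simp add: vec_eq_iff matrix_vector_mult_def qmat_def mult.commute)
qed

lemma qmat_comp: assumes "addv f" "addv g"
  shows "qmat (f \<circ> g) = qmat f ** qmat g"
proof -
  have "(qmat f ** qmat g) $ i $ j = qmat (f \<circ> g) $ i $ j" for i j
  proof -
    have "(qmat f *v toQ (g (axis j 1))) $ i = toQ (f (g (axis j 1))) $ i"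
      by (simp add: qmat_vec[OF assms(1)])
    then show ?thesis
      by (simp add: matrix_matrix_mult_def matrix_vector_mult_def qmat_def)
  qed
  then show ?thesis by (simp add: vec_eq_iff)
qed

lemma qmat_id: "qmat id = mat 1"
  by (simp add: qmat_def mat_def axis_def vec_eq_iff)

lemma qmat_inj: assumes "addv f" "addv g" "qmat f = qmat g" shows "f = g"
proof
  fix x
  have "toQ (f x) = toQ (g x)" using qmat_vec[OF assms(1)] qmat_vec[OF assms(2)] assms(3) by metis
  then show "f x = g x" by (simp add: toQ_inj)
qed


lemma mvq_smult: "(A :: rat^'n::finite^'m::finite) *v (c *s v) = c *s (A *v v)"
  by (simp add: vec_eq_iff matrix_vector_mult_def sum_distrib_left algebra_simps)

lemma row_dotq: "((A :: rat^'n::finite^'m::finite) *v v) $ k = dotq (A $ k) v"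
  by (simp add: matrix_vector_mult_def dotq_def)

lemma diag_refl_vec: "diag_refl k *v v = v - (2 * v $ k) *s axis k (1::rat)"
proof -
  have "(diag_refl k *v v) $ i = (if i = k then -1 else 1) * v $ i" for i
  proof -
    have e: "diag_refl k $ i $ j * v $ j = (if j = i then (if i = k then -1 else 1) * v $ j else 0)" for j
      by (simp add: diag_refl_def)
    show ?thesis unfolding matrix_vector_mult_def by (simp only: vec_lambda_beta e sum.delta finite UNIV_I if_True)
  qed
  then show ?thesis by (simp add: vec_eq_iff axis_def)
qed

lemma diag_refl_det: "det (diag_refl (k::'n::finite)) = -1"
proof -
  have "det (diag_refl k) = prod (\<lambda>i. diag_refl k $ i $ i) (UNIV :: 'n set)"
    by (rule det_diagonal) (simp add: diag_refl_def)
  also have "\<dots> = prod (\<lambda>i. if i = k then -1 else 1) (UNIV :: 'n set)"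
    by (simp add: diag_refl_def)
  also have "\<dots> = -1" by (simp add: prod.delta)
  finally show ?thesis .
qed

lemma diag_refl_sq: "diag_refl k ** diag_refl k = mat 1"
proof (rule matrix_eq[THEN iffD2], rule allI)
  fix v :: "rat^'a"
  have "diag_refl k *v (diag_refl k *v v) = v"
    unfolding diag_refl_vec by (simp add: vec_eq_iff axis_def)
  then show "(diag_refl k ** diag_refl k) *v v = mat 1 *v v"
    by (simp only: matrix_vector_mul_assoc matrix_vector_mul_lid)
qed

lemma reflection_Aut: "reflection \<sigma> \<Longrightarrow> \<sigma> \<in> Aut"
  unfolding reflection_def by blast

lemma reflection_addv: "reflection \<sigma> \<Longrightarrow> addv \<sigma>"
  using reflection_Aut Aut_addv by blast

lemma reflection_conj:
  fixes \<sigma> :: "('n::finite) lat \<Rightarrow> 'n lat"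
  assumes "reflection \<sigma>"
  obtains P Q :: "rat^'n^'n" and k :: 'n where "P ** Q = mat 1" "Q ** P = mat 1" "qmat \<sigma> = Q ** diag_refl k ** P"
proof -
  obtain P Q :: "rat^'n^'n" and k :: 'n where h: "P ** Q = mat 1" "Q ** P = mat 1" "P ** qmat \<sigma> ** Q = diag_refl k"
    using assms unfolding reflection_def by blast
  have "Q ** diag_refl k ** P = Q ** (P ** qmat \<sigma> ** Q) ** P" by (simp only: h(3))
  also have "\<dots> = (Q ** P) ** qmat \<sigma> ** (Q ** P)" by (simp only: matrix_mul_assoc)
  also have "\<dots> = qmat \<sigma>" by (simp only: h(2) matrix_mul_lid matrix_mul_rid)
  finally show ?thesis using h(1,2) that by metis
qed

lemma reflection_det: fixes \<sigma> :: "('n::finite) lat \<Rightarrow> 'n lat" assumes "reflection \<sigma>" shows "det (qmat \<sigma>) = -1"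
proof -
  obtain P Q :: "rat^'n^'n" and k :: 'n where h: "P ** Q = mat 1" "Q ** P = mat 1" "qmat \<sigma> = Q ** diag_refl k ** P"
    using reflection_conj[OF assms] by blast
  have 1: "det Q * det P = 1" using h(2) det_mul[of Q P] det_I by metis
  have "det (qmat \<sigma>) = det Q * det (diag_refl k) * det P" by (simp only: h(3) det_mul)
  also have "\<dots> = - (det Q * det P)" by (simp add: diag_refl_det)
  finally show ?thesis using 1 by simp
qed

lemma reflection_invol: fixes \<sigma> :: "('n::finite) lat \<Rightarrow> 'n lat" assumes "reflection \<sigma>" shows "\<sigma> \<circ> \<sigma> = id"
proof -
  obtain P Q :: "rat^'n^'n" and k :: 'n where h: "P ** Q = mat 1" "Q ** P = mat 1" "qmat \<sigma> = Q ** diag_refl k ** P"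
    using reflection_conj[OF assms] by blast
  have a: "addv \<sigma>" using assms reflection_addv by blast
  have "qmat (\<sigma> \<circ> \<sigma>) = qmat \<sigma> ** qmat \<sigma>" by (rule qmat_comp[OF a a])
  also have "\<dots> = (Q ** diag_refl k ** P) ** (Q ** diag_refl k ** P)" by (simp only: h(3))
  also have "\<dots> = Q ** diag_refl k ** (P ** Q) ** diag_refl k ** P" by (simp only: matrix_mul_assoc)
  also have "\<dots> = Q ** (diag_refl k ** diag_refl k) ** P" by (simp only: h(1) matrix_mul_rid matrix_mul_assoc)
  also have "\<dots> = mat 1" by (simp only: diag_refl_sq matrix_mul_rid h(2))
  finally show ?thesis using qmat_inj[OF addv_comp[OF a a] addv_id] qmat_id by metis
qed

lemma reflection_ne_id: fixes \<sigma> :: "('n::finite) lat \<Rightarrow> 'n lat"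
  assumes "reflection \<sigma>" shows "\<sigma> \<noteq> id"
proof
  assume "\<sigma> = id"
  then have "det (qmat \<sigma>) = 1" by (simp add: qmat_id)
  then show False using reflection_det[OF assms] by simp
qed

lemma reflection_form:
  fixes \<sigma> :: "('n::finite) lat \<Rightarrow> 'n lat"
  assumes "reflection \<sigma>"
  obtains p q where "dotq p q = -2" "\<And>x. toQ (\<sigma> x) = toQ x + dotq p (toQ x) *s q"
proof -
  obtain P Q :: "rat^'n^'n" and k :: 'n where h: "P ** Q = mat 1" "Q ** P = mat 1" "qmat \<sigma> = Q ** diag_refl k ** P"
    using reflection_conj[OF assms] by blast
  have a: "addv \<sigma>" using assms reflection_addv by blast
  define q where "q = Q *v axis k 1"
  define p where "p = (-2) *s (P $ k)"
  have "toQ (\<sigma> x) = toQ x + dotq p (toQ x) *s q" for x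
  proof -
    have "toQ (\<sigma> x) = Q *v (diag_refl k *v (P *v toQ x))"
      by (simp only: qmat_vec[OF a, symmetric] h(3) matrix_vector_mul_assoc matrix_mul_assoc)
    also have "\<dots> = Q *v (P *v toQ x) - (2 * (P *v toQ x) $ k) *s q"
      by (simp only: diag_refl_vec matrix_vector_mult_diff_distrib mvq_smult q_def)
    also have "\<dots> = toQ x - (2 * (P *v toQ x) $ k) *s q"
      by (simp only: matrix_vector_mul_assoc h(2) matrix_vector_mul_lid)
    also have "\<dots> = toQ x + dotq p (toQ x) *s q"
      by (simp add: p_def row_dotq vec_eq_iff)
    finally show ?thesis .
  qed
  moreover have "dotq p q = -2"
  proof -
    have "(P *v q) $ k = 1" by (simp add: q_def matrix_vector_mul_assoc h(1) axis_def)
    then show ?thesis by (simp add: p_def row_dotq)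
  qed
  ultimately show ?thesis using that by blast
qed


definition outer :: "rat^'n::finite \<Rightarrow> rat^'n \<Rightarrow> rat^'n^'n" where
  "outer u w = (\<chi> i j. u $ i * w $ j)"

lemma outer_vec: "outer u w *v a = dotq w a *s u"
  by (simp add: outer_def matrix_vector_mult_def dotq_def vec_eq_iff sum_distrib_left
      algebra_simps)

lemma dotq_comm: "dotq u v = dotq v u"
  by (simp add: dotq_def mult.commute)

lemma dotq_laxis[simp]: "dotq (axis k 1) u = u $ k"
  using dotq_axis[of u k] dotq_comm by metis

lemma dotq_ldiff[simp]: "dotq (u - v) x = dotq u x - dotq v x"
  by (simp add: dotq_def sum_subtractf algebra_simps)

lemma axis_comp: "axis k (1::rat) $ i = (if i = k then 1 else 0)"
  by (simp add: axis_def)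

definition Qm :: "rat^'n \<Rightarrow> rat^'n \<Rightarrow> 'n::finite \<Rightarrow> rat^'n^'n" where
  "Qm \<nu> r k = mat 1 - outer (axis k 1) (axis k 1)
      + outer r ((1/2) *s \<nu> + (1 - \<nu> $ k / 2) *s axis k 1)"

definition Pm :: "rat^'n \<Rightarrow> rat^'n \<Rightarrow> 'n::finite \<Rightarrow> rat^'n^'n" where
  "Pm \<nu> r k = mat 1 - outer r ((1 / r $ k) *s axis k 1) - outer (axis k 1) ((1/2) *s \<nu>)"

lemma Qm_vec: "Qm \<nu> r k *v a = a - (a $ k) *s axis k 1
   + (dotq \<nu> a / 2 + (1 - \<nu> $ k / 2) * a $ k) *s r"
  by (simp add: Qm_def matrix_vector_mult_add_rdistrib matrix_vector_mult_diff_rdistrib outer_vec)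
    (simp add: vec_eq_iff algebra_simps)

lemma Pm_vec: "Pm \<nu> r k *v v = v - (v $ k / r $ k) *s r - (dotq \<nu> v / 2) *s axis k 1"
  by (simp add: Pm_def matrix_vector_mult_add_rdistrib matrix_vector_mult_diff_rdistrib outer_vec)

lemma conj_exists:
  fixes \<nu> r :: "rat^'n::finite" and M :: "rat^'n^'n"
  assumes nr: "dotq \<nu> r = -2" and rk: "r $ k \<noteq> 0" and M: "\<And>v. M *v v = v + dotq \<nu> v *s r"
  shows "Pm \<nu> r k ** Qm \<nu> r k = mat 1" "Qm \<nu> r k ** Pm \<nu> r k = mat 1"
    "Pm \<nu> r k ** M ** Qm \<nu> r k = diag_refl k"
proof -
  let ?P = "Pm \<nu> r k" and ?Q = "Qm \<nu> r k"
  have PQ: "?P *v (?Q *v a) = a" for a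
  proof -
    have "?P *v (?Q *v a) = (let w = ?Q *v a in w - (w $ k / r $ k) *s r - (dotq \<nu> w / 2) *s axis k 1)"
      by (simp add: Pm_vec Let_def)
    also have "\<dots> = a"
      unfolding Qm_vec Let_def using nr rk
      by (auto simp add: vec_eq_iff axis_comp field_simps)
    finally show ?thesis .
  qed
  have QP: "?Q *v (?P *v a) = a" for a
  proof -
    have "?Q *v (?P *v a) = (let w = ?P *v a in w - (w $ k) *s axis k 1
       + (dotq \<nu> w / 2 + (1 - \<nu> $ k / 2) * w $ k) *s r)"
      by (simp add: Qm_vec Let_def)
    also have "\<dots> = a"
      unfolding Pm_vec Let_def using nr rk
      by (auto simp add: vec_eq_iff axis_comp field_simps)
    finally show ?thesis .
  qed
  have PMQ: "?P *v (M *v (?Q *v a)) = diag_refl k *v a" for a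
  proof -
    have "?P *v (M *v (?Q *v a)) = (let w = (?Q *v a) + dotq \<nu> (?Q *v a) *s r in
        w - (w $ k / r $ k) *s r - (dotq \<nu> w / 2) *s axis k 1)"
      by (simp add: Pm_vec M Let_def)
    also have "\<dots> = diag_refl k *v a"
      unfolding Qm_vec Let_def diag_refl_vec using nr rk
      by (auto simp add: vec_eq_iff axis_comp field_simps)
    finally show ?thesis .
  qed
  show "?P ** ?Q = mat 1"
    by (rule matrix_eq[THEN iffD2]) (simp add: matrix_vector_mul_assoc[symmetric] PQ)
  show "?Q ** ?P = mat 1"
    by (rule matrix_eq[THEN iffD2]) (simp add: matrix_vector_mul_assoc[symmetric] QP)
  show "?P ** M ** ?Q = diag_refl k"
    by (rule matrix_eq[THEN iffD2]) (simp add: matrix_vector_mul_assoc[symmetric] PMQ)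
qed


lemma rr_apply: "root_refl r \<beta> x = x + \<beta> x *s r"
  by (simp add: root_refl_def)

lemma rr_addv: "hom_Z \<beta> \<Longrightarrow> addv (root_refl r \<beta>)"
  by (simp add: addv_def root_refl_def hom_Z_add vec_eq_iff algebra_simps)

lemma rr_invol_pt: assumes "hom_Z \<beta>" "\<beta> r = -2"
  shows "root_refl r \<beta> (root_refl r \<beta> x) = x"
  using assms by (simp add: root_refl_def hom_Z_add hom_Z_smult vec_eq_iff algebra_simps)

lemma rr_invol: assumes "hom_Z \<beta>" "\<beta> r = -2"
  shows "root_refl r \<beta> \<circ> root_refl r \<beta> = id"
  using rr_invol_pt[OF assms] by auto

lemma rr_bij: assumes "hom_Z \<beta>" "\<beta> r = -2" shows "bij (root_refl r \<beta>)"
  using rr_invol_pt[OF assms] by (metis bij_betw_def inj_def surj_def)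

lemma rr_Aut: assumes "hom_Z \<beta>" "\<beta> r = -2" shows "root_refl r \<beta> \<in> Aut"
  using rr_bij[OF assms] rr_addv[OF assms(1)] unfolding Aut_def addv_def by blast

lemma rr_inv: assumes "hom_Z \<beta>" "\<beta> r = -2" shows "inv (root_refl r \<beta>) = root_refl r \<beta>"
  using rr_invol[OF assms] by (metis inv_unique_comp)

lemma rr_qmat: assumes "hom_Z \<beta>" shows "qmat (root_refl r \<beta>) = mat 1 + outer (toQ r) (bv \<beta>)"
  by (simp add: qmat_def root_refl_def outer_def bv_def mat_def axis_def vec_eq_iff)

lemma rr_qmat_vec: assumes "hom_Z \<beta>"
  shows "qmat (root_refl r \<beta>) *v v = v + dotq (bv \<beta>) v *s toQ r"
  by (simp add: rr_qmat[OF assms] matrix_vector_mult_add_rdistrib outer_vec)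

lemma rr_reflection: assumes "hom_Z \<beta>" "\<beta> r = -2" shows "reflection (root_refl r \<beta>)"
proof -
  have "r \<noteq> 0" using assms hom_Z_0 by force
  then obtain k where k: "r $ k \<noteq> 0" by (auto simp: vec_eq_iff)
  have rk: "toQ r $ k \<noteq> 0" using k by simp
  have nr: "dotq (bv \<beta>) (toQ r) = -2" using hom_Z_bv[OF assms(1), of r] assms(2) by simp
  note c = conj_exists[OF nr rk rr_qmat_vec[OF assms(1)]]
  show ?thesis unfolding reflection_def using rr_Aut[OF assms] c by blast
qed


lemma gg_id: "id \<in> gen_group S"
  unfolding gen_group_def by simp
lemma gg_base: "s \<in> S \<Longrightarrow> s \<in> gen_group S"
  unfolding gen_group_def by auto
lemma gg_comp: "f \<in> gen_group S \<Longrightarrow> g \<in> gen_group S \<Longrightarrow> f \<circ> g \<in> gen_group S"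
  unfolding gen_group_def by simp
lemma gg_inv: "f \<in> gen_group S \<Longrightarrow> inv f \<in> gen_group S"
  unfolding gen_group_def by simp
lemma gg_minimal: "id \<in> H \<Longrightarrow> S \<subseteq> H \<Longrightarrow> (\<forall>f\<in>H. \<forall>g\<in>H. f \<circ> g \<in> H) \<Longrightarrow> (\<forall>f\<in>H. inv f \<in> H)
  \<Longrightarrow> gen_group S \<subseteq> H"
  unfolding gen_group_def by (rule Inter_lower) simp
lemma gg_mono: "A \<subseteq> B \<Longrightarrow> gen_group A \<subseteq> gen_group B"
  unfolding gen_group_def by (rule Inter_anti_mono) auto
lemma gg_induct[consumes 1, case_names id base comp inv]:
  assumes "w \<in> gen_group S"
    and "P id"
    and "\<And>s. s \<in> S \<Longrightarrow> P s"
    and "\<And>f g. f \<in> gen_group S \<Longrightarrow> g \<in> gen_group S \<Longrightarrow> P f \<Longrightarrow> P g \<Longrightarrow> P (f \<circ> g)"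
    and "\<And>f. f \<in> gen_group S \<Longrightarrow> P f \<Longrightarrow> P (inv f)"
  shows "P w"
proof -
  have "gen_group S \<subseteq> {f \<in> gen_group S. P f}"
  proof (rule gg_minimal)
    show "id \<in> {f \<in> gen_group S. P f}" using assms(2) gg_id by simp
    show "S \<subseteq> {f \<in> gen_group S. P f}" using assms(3) gg_base by auto
    show "\<forall>f\<in>{f \<in> gen_group S. P f}. \<forall>g\<in>{f \<in> gen_group S. P f}. f \<circ> g \<in> {f \<in> gen_group S. P f}"
      using assms(4) by (auto intro: gg_comp)
    show "\<forall>f\<in>{f \<in> gen_group S. P f}. inv f \<in> {f \<in> gen_group S. P f}"
      using assms(5) by (auto intro: gg_inv)
  qed
  then show ?thesis using assms(1) by blast
qed

lemma funpow_transv: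
  assumes a: "addv g" and h: "\<And>x. g (g x - x) = g x - x"
  shows "(g ^^ k) x = x + int k *s (g x - x)"
proof (induction k)
  case 0
  then show ?case by (simp add: vec_eq_iff)
next
  case (Suc k)
  have "(g ^^ Suc k) x = g (x + int k *s (g x - x))" using Suc by simp
  also have "\<dots> = g x + int k *s (g x - x)" by (simp only: addv_add[OF a] addv_smult[OF a] h)
  also have "\<dots> = x + int (Suc k) *s (g x - x)" by (simp add: vec_eq_iff algebra_simps)
  finally show ?case .
qed

lemma transvection:
  assumes fin: "finite W" and idW: "id \<in> W" and cW: "\<forall>f\<in>W. \<forall>g\<in>W. f \<circ> g \<in> W"
    and gW: "g \<in> W" and a: "addv g" and h: "\<And>x. g (g x - x) = g x - x"
  shows "g = id"
proof (rule ccontr)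
  assume "g \<noteq> id"
  then obtain x where x: "g x \<noteq> x" by (auto simp: fun_eq_iff)
  then obtain i where i: "(g x - x) $ i \<noteq> 0" by (auto simp: vec_eq_iff)
  have pw: "g ^^ k \<in> W" for k
  proof (induction k)
    case 0 then show ?case using idW by (simp only: funpow.simps(1))
  next
    case (Suc k) then show ?case using cW gW by (simp only: funpow.simps(2))
  qed
  have "inj (\<lambda>k. g ^^ k)"
  proof (rule injI)
    fix k l assume "g ^^ k = g ^^ l"
    then have "(g ^^ k) x = (g ^^ l) x" by simp
    then have "x + int k *s (g x - x) = x + int l *s (g x - x)" by (simp add: funpow_transv[OF a h])
    then have "(x + int k *s (g x - x)) $ i = (x + int l *s (g x - x)) $ i" by simp
    then have "int k * (g x - x) $ i = int l * (g x - x) $ i" by (simp only: vector_add_component vector_smult_component)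
    then show "k = l" using i by (metis mult_cancel_right of_nat_eq_iff)
  qed
  moreover have "range (\<lambda>k. g ^^ k) \<subseteq> W" using pw by auto
  ultimately show False using fin finite_subset finite_imageD by (metis infinite_UNIV_nat)
qed

lemma find_regular:
  fixes N :: "'a \<Rightarrow> ('n::finite) dual"
  assumes "finite A" and z: "0 \<in> F" and add: "\<And>x y. x \<in> F \<Longrightarrow> y \<in> F \<Longrightarrow> x + y \<in> F"
    and sm: "\<And>x c. x \<in> F \<Longrightarrow> c *s x \<in> F"
    and hom: "\<And>a. a \<in> A \<Longrightarrow> hom_Z (N a)"
    and ex: "\<And>a. a \<in> A \<Longrightarrow> \<exists>y\<in>F. N a y \<noteq> 0"
  shows "\<exists>x\<in>F. \<forall>a\<in>A. N a x \<noteq> 0"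
  using assms(1) hom ex
proof (induction A rule: finite_induct)
  case empty
  then show ?case using z by blast
next
  case (insert a A)
  then obtain x where x: "x \<in> F" "\<forall>a'\<in>A. N a' x \<noteq> 0" by blast
  obtain y where y: "y \<in> F" "N a y \<noteq> 0" using insert.prems by blast
  show ?case
  proof (cases "N a x = 0")
    case False
    then show ?thesis using x by blast
  next
    case True
    define C where "C = 1 + (\<Sum>a'\<in>A. \<bar>N a' y\<bar>)"
    define w where "w = C *s x + y"
    have wF: "w \<in> F" unfolding w_def using add sm x y by blast
    have "N a' w \<noteq> 0" if "a' \<in> A" for a'
    proof -
      have hA: "hom_Z (N a')" using insert.prems that by blast
      have 1: "N a' w = C * N a' x + N a' y" unfolding w_def by (simp add: hom_Z_add[OF hA] hom_Z_smult[OF hA])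
      have "\<bar>N a' y\<bar> \<le> (\<Sum>a'\<in>A. \<bar>N a' y\<bar>)"
        by (intro member_le_sum) (auto simp: that insert.hyps(1))
      then have 2: "\<bar>N a' y\<bar> < C" unfolding C_def by simp
      have 3: "\<bar>N a' x\<bar> \<ge> 1" using x that by auto
      have Cp: "C > 0" using 2 by linarith
      have "C * 1 \<le> C * \<bar>N a' x\<bar>" using 3 Cp by (intro mult_left_mono) auto
      then have "C \<le> \<bar>C * N a' x\<bar>" using Cp by (simp add: abs_mult)
      then show ?thesis using 1 2 by auto
    qed
    moreover have "N a w \<noteq> 0"
    proof -
      have hA: "hom_Z (N a)" using insert.prems by blast
      show ?thesis unfolding w_def using True y by (simp add: hom_Z_add[OF hA] hom_Z_smult[OF hA])
    qed
    ultimately show ?thesis using wF by blast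
  qed
qed

lemma prod_involution:
  fixes g :: "'a \<Rightarrow> int"
  assumes "finite A" and "\<And>a. a \<in> A \<Longrightarrow> f a \<in> A" and "\<And>a. a \<in> A \<Longrightarrow> f (f a) = a"
    and "\<And>a. a \<in> A \<Longrightarrow> g (f a) = g a" and "\<And>a. a \<in> A \<Longrightarrow> g a * g a = 1"
  shows "prod g A = prod g {a\<in>A. f a = a}"
  using assms
proof (induction "card A" arbitrary: A rule: less_induct)
  case less
  show ?case
  proof (cases "\<forall>a\<in>A. f a = a")
    case True
    then have "{a\<in>A. f a = a} = A" by auto
    then show ?thesis by simp
  next
    case False
    then obtain a where a: "a \<in> A" "f a \<noteq> a" by blast
    define A' where "A' = A - {a, f a}"
    have fa: "f a \<in> A" using less.prems(2) a by blast
    have fin: "finite A'" using less.prems(1) unfolding A'_def by simp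
    have cardlt: "card A' < card A" unfolding A'_def using a less.prems(1)
      by (intro psubset_card_mono) auto
    have A'sub: "A' \<subseteq> A" unfolding A'_def by blast
    have A'inv: "f b \<in> A'" if b: "b \<in> A'" for b
    proof -
      have bA: "b \<in> A" "b \<noteq> a" "b \<noteq> f a" using b unfolding A'_def by auto
      have "f b \<in> A" using less.prems(2) bA(1) .
      moreover have "f b \<noteq> a"
      proof
        assume "f b = a"
        then have "f (f b) = f a" by simp
        then show False using less.prems(3)[OF bA(1)] bA(3) by simp
      qed
      moreover have "f b \<noteq> f a"
      proof
        assume "f b = f a"
        then have "f (f b) = f (f a)" by simp
        then show False using less.prems(3)[OF bA(1)] less.prems(3)[OF a(1)] bA(2) by simp
      qed
      ultimately show ?thesis unfolding A'_def by simp
    qed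
    have IH: "prod g A' = prod g {b\<in>A'. f b = b}"
    proof (rule less.hyps[OF cardlt fin])
      show "\<And>b. b \<in> A' \<Longrightarrow> f b \<in> A'" using A'inv .
      show "\<And>b. b \<in> A' \<Longrightarrow> f (f b) = b" using less.prems(3) A'sub by blast
      show "\<And>b. b \<in> A' \<Longrightarrow> g (f b) = g b" using less.prems(4) A'sub by blast
      show "\<And>b. b \<in> A' \<Longrightarrow> g b * g b = 1" using less.prems(5) A'sub by blast
    qed
    have Aeq: "A = insert a (insert (f a) A')" unfolding A'_def using a fa by auto
    have "prod g A = g a * (g (f a) * prod g A')"
      using fin a unfolding Aeq by (simp add: A'_def)
    also have "\<dots> = prod g A'" using less.prems(4)[OF a(1)] less.prems(5)[OF a(1)] by (simp add: mult.assoc[symmetric])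
    finally have 1: "prod g A = prod g A'" .
    have "{b\<in>A'. f b = b} = {b\<in>A. f b = b}" unfolding A'_def using a less.prems(3) by auto
    then show ?thesis using IH 1 by simp
  qed
qed


lemma agree_span:
  fixes f g :: "('n::finite) lat \<Rightarrow> 'n lat"
  assumes af: "addv f" and ag: "addv g" and eq: "\<And>x. x \<in> S \<Longrightarrow> f x = g x"
    and sp: "vec.span (toQ ` S) = UNIV"
  shows "f = g"
proof -
  define D where "D = {v. \<exists>m::int. m \<noteq> 0 \<and> (\<exists>z. f z = g z \<and> toQ z = of_int m *s v)}"
  have "v \<in> D" if "v \<in> vec.span (toQ ` S)" for v
    using that
  proof (induction rule: vec.span_induct_alt)
    case base
    show ?case unfolding D_def
      by (rule CollectI, rule exI[of _ 1], simp, rule exI[of _ 0])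
         (simp add: addv_0[OF af] addv_0[OF ag])
  next
    case (step c x y)
    obtain s0 where s0: "s0 \<in> S" "x = toQ s0" using step.hyps by blast
    obtain m z where mz: "m \<noteq> 0" "f z = g z" "toQ z = of_int m *s y"
      using step.IH unfolding D_def by blast
    obtain a b where ab: "c = of_int a / of_int b" "b > 0"
      by (cases c) (auto simp: Fract_of_int_quotient)
    define z' where "z' = (a * m) *s s0 + b *s z"
    have "f z' = g z'" unfolding z'_def
      by (simp add: addv_add[OF af] addv_add[OF ag] addv_smult[OF af] addv_smult[OF ag] mz(2) eq[OF s0(1)])
    moreover have "toQ z' = of_int (b * m) *s (c *s x + y)"
      unfolding z'_def using ab(2) by (simp add: s0(2) mz(3) ab(1) vec_eq_iff field_simps)
    moreover have "b * m \<noteq> 0" using mz(1) ab(2) by simp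
    ultimately show ?case unfolding D_def by blast
  qed
  then have all: "v \<in> D" for v using sp by blast
  show ?thesis
  proof
    fix x
    obtain m z where mz: "m \<noteq> 0" "f z = g z" "toQ z = of_int m *s toQ x"
      using all[of "toQ x"] unfolding D_def by blast
    have "z = m *s x" using mz(3) by (simp add: toQ_inj[symmetric])
    then have "m *s f x = m *s g x" using mz(2) by (simp add: addv_smult[OF af] addv_smult[OF ag])
    then show "f x = g x" using mz(1) by (simp add: vec_eq_iff)
  qed
qed

locale rsys =
  fixes R :: "('n::finite) lat set" and n :: "'n lat \<Rightarrow> 'n dual"
  assumes rs: "root_system R n"
begin

definition s :: "'n lat \<Rightarrow> 'n lat \<Rightarrow> 'n lat" where "s r = root_refl r (n r)"
definition W :: "('n lat \<Rightarrow> 'n lat) set" where "W = gen_group (s ` R)"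
definition K :: "'n lat set" where "K = (\<Inter>r\<in>R. {x. n r x = 0})"

lemma finR: "finite R" using rs unfolding root_system_def by blast
lemma hom: "r \<in> R \<Longrightarrow> hom_Z (n r)" using rs unfolding root_system_def by blast
lemma off: "r \<notin> R \<Longrightarrow> n r = (\<lambda>_. 0)" using rs unfolding root_system_def by blast
lemma span: "vec.span (toQ ` (R \<union> K)) = UNIV" using rs unfolding root_system_def K_def by blast
lemma nrr: "r \<in> R \<Longrightarrow> n r r = -2" using rs unfolding root_system_def by blast
lemma R3: "r \<in> R \<Longrightarrow> k *s r \<in> R \<Longrightarrow> k = 1 \<or> k = -1" using rs unfolding root_system_def by blast
lemma R4: "r \<in> R \<Longrightarrow> t \<in> R \<Longrightarrow> t + n r t *s r \<in> R" using rs unfolding root_system_def by blast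

lemma s_apply: "s r x = x + n r x *s r" by (simp add: s_def root_refl_def)
lemma s_addv: "r \<in> R \<Longrightarrow> addv (s r)" unfolding s_def by (rule rr_addv[OF hom])
lemma s_invol: "r \<in> R \<Longrightarrow> s r (s r x) = x" unfolding s_def by (rule rr_invol_pt[OF hom nrr])
lemma s_Aut: "r \<in> R \<Longrightarrow> s r \<in> Aut" unfolding s_def by (rule rr_Aut[OF hom nrr])
lemma s_inv: "r \<in> R \<Longrightarrow> inv (s r) = s r" unfolding s_def by (rule rr_inv[OF hom nrr])
lemma s_refl: "r \<in> R \<Longrightarrow> reflection (s r)" unfolding s_def by (rule rr_reflection[OF hom nrr])
lemma r_ne0: "r \<in> R \<Longrightarrow> r \<noteq> 0" using nrr hom hom_Z_0 by force
lemma s_R: "r \<in> R \<Longrightarrow> t \<in> R \<Longrightarrow> s r t \<in> R" using R4 s_apply by simp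
lemma s_self: "r \<in> R \<Longrightarrow> s r r = - r" using nrr by (simp add: s_apply vec_eq_iff)
lemma neg_R: "r \<in> R \<Longrightarrow> - r \<in> R" using s_R s_self by metis
lemma s_K: "x \<in> K \<Longrightarrow> r \<in> R \<Longrightarrow> s r x = x" unfolding K_def by (simp add: s_apply)

definition Hset where "Hset = {f \<in> Aut. f ` R = R \<and> (\<forall>x\<in>K. f x = x)}"

lemma W_Hset: "W \<subseteq> Hset"
  unfolding W_def
proof (rule gg_minimal)
  show "id \<in> Hset" unfolding Hset_def using Aut_id by simp
  show "s ` R \<subseteq> Hset"
  proof
    fix f assume "f \<in> s ` R"
    then obtain r where r: "r \<in> R" "f = s r" by blast
    have "s r ` R \<subseteq> R" using s_R r by blast
    moreover have "R \<subseteq> s r ` R"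
    proof
      fix t assume "t \<in> R"
      then show "t \<in> s r ` R" using s_invol[OF r(1), of t] s_R[OF r(1)] by (metis imageI)
    qed
    ultimately show "f \<in> Hset" unfolding Hset_def using r s_Aut s_K by auto
  qed
  show "\<forall>f\<in>Hset. \<forall>g\<in>Hset. f \<circ> g \<in> Hset"
  proof (intro ballI)
    fix f g assume f: "f \<in> Hset" and g: "g \<in> Hset"
    then have "f ` (g ` R) = R" unfolding Hset_def by simp
    then have "(f \<circ> g) ` R = R" by (simp only: image_comp)
    then show "f \<circ> g \<in> Hset" using f g unfolding Hset_def by (auto simp: Aut_comp)
  qed
  show "\<forall>f\<in>Hset. inv f \<in> Hset"
  proof
    fix f assume f: "f \<in> Hset"
    then have fA: "f \<in> Aut" and fR: "f ` R = R" and fK: "\<forall>x\<in>K. f x = x" unfolding Hset_def by auto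
    have b: "bij f" using fA Aut_bij by blast
    have "inv f ` R = R" using fR b by (metis bij_is_inj image_inv_f_f)
    moreover have "\<forall>x\<in>K. inv f x = x" using fK b by (metis bij_is_inj inv_f_f)
    ultimately show "inv f \<in> Hset" unfolding Hset_def using Aut_inv[OF fA] by blast
  qed
qed

lemma Hset_finite: "finite Hset"
proof -
  have "inj_on (\<lambda>w. restrict w R) Hset"
  proof (rule inj_onI)
    fix f g assume f: "f \<in> Hset" and g: "g \<in> Hset" and e: "restrict f R = restrict g R"
    have af: "addv f" and ag: "addv g" using f g Aut_addv unfolding Hset_def by auto
    have "f x = g x" if "x \<in> R \<union> K" for x
    proof (cases "x \<in> R")
      case True
      then show ?thesis using e by (metis restrict_apply')
    next
      case False
      then have "x \<in> K" using that by blast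
      then show ?thesis using f g unfolding Hset_def by auto
    qed
    then show "f = g" using agree_span[OF af ag _ span] by blast
  qed
  moreover have "(\<lambda>w. restrict w R) ` Hset \<subseteq> (\<Pi>\<^sub>E i\<in>R. R)"
    unfolding Hset_def by auto
  moreover have "finite (\<Pi>\<^sub>E i\<in>R. R)" using finR by (simp add: finite_PiE)
  ultimately show ?thesis by (metis finite_imageD finite_subset)
qed

lemma W_finite: "finite W" using W_Hset Hset_finite finite_subset by blast
lemma W_id: "id \<in> W" unfolding W_def by (rule gg_id)
lemma W_comp: "f \<in> W \<Longrightarrow> g \<in> W \<Longrightarrow> f \<circ> g \<in> W" unfolding W_def by (rule gg_comp)
lemma W_inv: "f \<in> W \<Longrightarrow> inv f \<in> W" unfolding W_def by (rule gg_inv)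
lemma W_s: "r \<in> R \<Longrightarrow> s r \<in> W" unfolding W_def by (rule gg_base) blast
lemma W_Aut: "f \<in> W \<Longrightarrow> f \<in> Aut" using W_Hset unfolding Hset_def by blast
lemma W_addv: "f \<in> W \<Longrightarrow> addv f" using W_Aut Aut_addv by blast
lemma W_bij: "f \<in> W \<Longrightarrow> bij f" using W_Aut Aut_bij by blast
lemma W_R: "f \<in> W \<Longrightarrow> r \<in> R \<Longrightarrow> f r \<in> R" using W_Hset unfolding Hset_def by blast
lemma W_inv_r: "f \<in> W \<Longrightarrow> f (inv f x) = x" using W_bij by (meson bij_inv_eq_iff)
lemma W_inv_l: "f \<in> W \<Longrightarrow> inv f (f x) = x" using W_bij by (meson bij_is_inj inv_f_f)
lemma W_neg: "f \<in> W \<Longrightarrow> f (- x) = - f x" using W_addv addv_neg by blast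
lemma W_closed: "\<forall>f\<in>W. \<forall>g\<in>W. f \<circ> g \<in> W" using W_comp by blast

end


context rsys
begin

lemma eqv:
  assumes w: "w \<in> W" and r: "r \<in> R"
  shows "n (w r) x = n r (inv w x)"
proof -
  define t where "t = w r"
  have tR: "t \<in> R" unfolding t_def using W_R[OF w r] .
  have t0: "t \<noteq> 0" using r_ne0[OF tR] .
  have aw: "addv w" and aiw: "addv (inv w)" using W_addv w W_inv by auto
  have iwt: "inv w t = r" unfolding t_def using W_inv_l[OF w] .
  define g where "g = s t \<circ> (w \<circ> s r \<circ> inv w)"
  have gW: "g \<in> W" unfolding g_def using W_comp W_s W_inv w r tR by simp
  have ag: "addv g" unfolding g_def
    using addv_comp s_addv[OF tR] s_addv[OF r] aw aiw by metis
  have conj: "(w \<circ> s r \<circ> inv w) y = y + n r (inv w y) *s t" for y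
    by (simp add: s_apply addv_add[OF aw] addv_smult[OF aw] W_inv_r[OF w] t_def)
  have gform: "g y = y + (n t y - n r (inv w y)) *s t" for y
  proof -
    have "g y = s t ((w \<circ> s r \<circ> inv w) y)" unfolding g_def by simp
    also have "\<dots> = s t (y + n r (inv w y) *s t)" by (simp only: conj)
    finally show ?thesis
    by (simp add: s_apply hom_Z_add[OF hom[OF tR]] hom_Z_smult[OF hom[OF tR]] nrr[OF tR]
        vec_eq_iff algebra_simps)
  qed
  have "g (g y - y) = g y - y" for y
  proof -
    define d where "d = n t y - n r (inv w y)"
    have e: "g y - y = d *s t" unfolding d_def gform by simp
    have 1: "n t (d *s t) = -2 * d" by (simp add: hom_Z_smult[OF hom[OF tR]] nrr[OF tR])
    have 2: "n r (inv w (d *s t)) = -2 * d"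
      by (simp add: addv_smult[OF aiw] iwt hom_Z_smult[OF hom[OF r]] nrr[OF r])
    have "g (d *s t) = d *s t" using gform[of "d *s t"] 1 2 by simp
    then show ?thesis using e by simp
  qed
  then have "g = id" using transvection[OF W_finite W_id W_closed gW ag] by blast
  then have "(n t x - n r (inv w x)) *s t = 0" using gform[of x] by (metis add_cancel_left_right id_apply)
  then show ?thesis using t0 unfolding t_def[symmetric] by (auto simp: vec_eq_iff)
qed

lemma eqv_s:
  assumes w: "w \<in> W" and r: "r \<in> R"
  shows "w \<circ> s r \<circ> inv w = s (w r)"
proof
  fix y
  have aw: "addv w" using W_addv w by auto
  show "(w \<circ> s r \<circ> inv w) y = s (w r) y"
    by (simp add: s_apply addv_add[OF aw] addv_smult[OF aw] W_inv_r[OF w] eqv[OF w r])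
qed

lemma n_neg: assumes r: "r \<in> R" shows "n (- r) = (\<lambda>x. - n r x)"
proof
  fix x
  have "n (- r) x = n (s r r) x" by (simp add: s_self[OF r])
  also have "\<dots> = n r (s r x)" using eqv[OF W_s[OF r] r] s_inv[OF r] by simp
  also have "\<dots> = - n r x" by (simp add: s_apply hom_Z_add[OF hom[OF r]] hom_Z_smult[OF hom[OF r]] nrr[OF r])
  finally show "n (- r) x = - n r x" .
qed

lemma s_neg: assumes r: "r \<in> R" shows "s (- r) = s r"
  by (rule ext) (simp add: s_apply n_neg[OF r] vec_eq_iff)

lemma two_mult:
  assumes t: "t \<in> R" and r: "r \<in> R" and e: "2 *s t = c *s r" and cd: "c * d = (4::int)"
  shows "t = r \<or> t = - r"
proof -
  have c0: "c \<noteq> 0" using cd by auto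
  have d0: "d \<noteq> 0" using cd by auto
  have "\<bar>c\<bar> \<le> 4"
  proof -
    have "\<bar>c\<bar> * 1 \<le> \<bar>c\<bar> * \<bar>d\<bar>" using d0 by (intro mult_left_mono) auto
    then show ?thesis using cd by (simp add: abs_mult[symmetric])
  qed
  then have "c \<in> {-4, -3, -2, -1, 1, 2, 3, 4}" using c0 by auto
  then consider "c = -4" | "c = -3" | "c = -2" | "c = -1" | "c = 1" | "c = 2" | "c = 3" | "c = 4" by blast
  then show ?thesis
  proof cases
    case 1
    then have "t = (-2) *s r" using e by (auto simp: vec_eq_iff)
    then have False using R3[OF r, of "-2"] t by simp
    then show ?thesis ..
  next
    case 2 then show ?thesis using cd by presburger
  next
    case 3 then show ?thesis using e by (auto simp: vec_eq_iff)
  next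
    case 4
    then have "r = (-2) *s t" using e by (auto simp: vec_eq_iff)
    then have False using R3[OF t, of "-2"] r by simp
    then show ?thesis ..
  next
    case 5
    then have "r = 2 *s t" using e by (auto simp: vec_eq_iff)
    then have False using R3[OF t, of "2"] r by simp
    then show ?thesis ..
  next
    case 6 then show ?thesis using e by (auto simp: vec_eq_iff)
  next
    case 7 then show ?thesis using cd by presburger
  next
    case 8
    then have "t = 2 *s r" using e by (auto simp: vec_eq_iff)
    then have False using R3[OF r, of "2"] t by simp
    then show ?thesis ..
  qed
qed

lemma s_minus_eq:
  assumes r: "r \<in> R" and p: "p \<in> R" and e: "s r p = - p"
  shows "p = r \<or> p = - r"
proof -
  have 1: "2 *s p = (- n r p) *s r" using e by (simp add: s_apply vec_eq_iff) (metis add.inverse_inverse add_eq_0_iff2 mult_2 neg_eq_iff_add_eq_0)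
  have "n p (2 *s p) = n p ((- n r p) *s r)" using 1 by simp
  then have "(- n r p) * (- n p r) = 4" by (simp add: hom_Z_smult[OF hom[OF p]] nrr[OF p])
  then show ?thesis using two_mult[OF p r 1] by blast
qed

lemma s_eq:
  assumes r: "r \<in> R" and t: "t \<in> R" and e: "s r = s t"
  shows "t = r \<or> t = - r"
proof -
  have "s r t = - t" using e s_self[OF t] by simp
  then show ?thesis using s_minus_eq[OF r t] by blast
qed

end


context rsys
begin

lemma neg_swap: "- a = b \<Longrightarrow> a = - (b::'a::group_add)" by auto

definition Pi :: "'n lat \<Rightarrow> 'n lat set" where "Pi x = {p\<in>R. n p x < 0}"
definition sg :: "'n lat \<Rightarrow> 'n lat \<Rightarrow> int" where "sg x y = (if y \<in> Pi x then 1 else -1)"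
definition eps :: "'n lat \<Rightarrow> ('n lat \<Rightarrow> 'n lat) \<Rightarrow> int" where
  "eps x w = prod (\<lambda>p. sg x (w p)) (Pi x)"
definition pos :: "'n lat \<Rightarrow> 'n lat \<Rightarrow> 'n lat" where "pos x y = (if y \<in> Pi x then y else - y)"

lemma Pi_fin: "finite (Pi x)" unfolding Pi_def using finR by simp
lemma Pi_R: "p \<in> Pi x \<Longrightarrow> p \<in> R" unfolding Pi_def by simp

lemma neg_Pi: assumes reg: "\<forall>p\<in>R. n p x \<noteq> 0" and y: "y \<in> R"
  shows "- y \<in> Pi x \<longleftrightarrow> y \<notin> Pi x"
  using reg y neg_R[OF y] unfolding Pi_def by (auto simp: n_neg[OF y])

lemma sg_neg: assumes reg: "\<forall>p\<in>R. n p x \<noteq> 0" and y: "y \<in> R"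
  shows "sg x (- y) = - sg x y"
  using neg_Pi[OF reg y] unfolding sg_def by auto

lemma pos_Pi: assumes reg: "\<forall>p\<in>R. n p x \<noteq> 0" and y: "y \<in> R"
  shows "pos x y \<in> Pi x"
  using neg_Pi[OF reg y] unfolding pos_def by auto

lemma sg_sq: "sg x y * sg x y = 1" unfolding sg_def by auto

lemma sg_mult:
  assumes reg: "\<forall>p\<in>R. n p x \<noteq> 0" and u: "u \<in> W" and y: "y \<in> R"
  shows "sg x (u y) = sg x y * sg x (u (pos x y))"
proof (cases "y \<in> Pi x")
  case True
  then show ?thesis unfolding pos_def sg_def by simp
next
  case False
  have uy: "u y \<in> R" using W_R[OF u y] .
  have "sg x (u (pos x y)) = sg x (- u y)" unfolding pos_def using False W_neg[OF u] by simp
  also have "\<dots> = - sg x (u y)" using sg_neg[OF reg uy] .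
  finally show ?thesis using False unfolding sg_def by simp
qed

lemma pos_bij:
  assumes reg: "\<forall>p\<in>R. n p x \<noteq> 0" and w: "w \<in> W"
  shows "bij_betw (\<lambda>p. pos x (w p)) (Pi x) (Pi x)"
proof -
  have sub: "(\<lambda>p. pos x (w p)) ` Pi x \<subseteq> Pi x"
    using pos_Pi[OF reg] W_R[OF w] Pi_R by blast
  have inj: "inj_on (\<lambda>p. pos x (w p)) (Pi x)"
  proof (rule inj_onI)
    fix p q assume p: "p \<in> Pi x" and q: "q \<in> Pi x" and e: "pos x (w p) = pos x (w q)"
    have injw: "inj w" using W_bij[OF w] bij_is_inj by blast
    have "w p = w q \<or> w p = - w q"
      using e unfolding pos_def by (auto split: if_splits dest: neg_swap)
    then have "p = q \<or> p = - q" using injw W_neg[OF w] by (metis injD)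
    then show "p = q"
    proof
      assume "p = - q"
      then show "p = q" using neg_Pi[OF reg Pi_R[OF q]] p q by simp
    qed
  qed
  show ?thesis unfolding bij_betw_def using inj endo_inj_surj[OF Pi_fin sub inj] by blast
qed

lemma eps_mult:
  assumes reg: "\<forall>p\<in>R. n p x \<noteq> 0" and u: "u \<in> W" and w: "w \<in> W"
  shows "eps x (u \<circ> w) = eps x u * eps x w"
proof -
  have "eps x (u \<circ> w) = prod (\<lambda>p. sg x (w p) * sg x (u (pos x (w p)))) (Pi x)"
    unfolding eps_def using sg_mult[OF reg u] W_R[OF w] Pi_R by (intro prod.cong) auto
  also have "\<dots> = eps x w * prod (\<lambda>p. sg x (u (pos x (w p)))) (Pi x)"
    unfolding eps_def by (simp add: prod.distrib)
  also have "prod (\<lambda>p. sg x (u (pos x (w p)))) (Pi x) = eps x u"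
    unfolding eps_def using prod.reindex_bij_betw[OF pos_bij[OF reg w], of "\<lambda>q. sg x (u q)"] by simp
  finally show ?thesis by (simp add: mult.commute comp_def)
qed

lemma eps_id: "eps x id = 1"
  unfolding eps_def sg_def by simp

lemma eps_s:
  assumes reg: "\<forall>p\<in>R. n p x \<noteq> 0" and r: "r \<in> R"
  shows "eps x (s r) = -1"
proof -
  define f where "f p = pos x (s r p)" for p
  define g where "g p = sg x (s r p)" for p
  have f_in: "f p \<in> Pi x" if "p \<in> Pi x" for p
    unfolding f_def using pos_Pi[OF reg s_R[OF r Pi_R[OF that]]] .
  have ff: "f (f p) = p" and gf: "g (f p) = g p" if p: "p \<in> Pi x" for p
  proof -
    have pR: "p \<in> R" using Pi_R[OF p] .
    have "f (f p) = p \<and> g (f p) = g p"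
    proof (cases "s r p \<in> Pi x")
      case True
      then show ?thesis using p unfolding f_def g_def pos_def sg_def by (simp add: s_invol[OF r])
    next
      case False
      have "s r (- s r p) = - p" using s_addv[OF r] addv_neg s_invol[OF r] by metis
      moreover have "- p \<notin> Pi x" using neg_Pi[OF reg pR] p by simp
      ultimately show ?thesis using False p unfolding f_def g_def pos_def sg_def by simp
    qed
    then show "f (f p) = p" "g (f p) = g p" by auto
  qed
  have "prod g (Pi x) = prod g {p\<in>Pi x. f p = p}"
    by (rule prod_involution) (use Pi_fin f_in ff gf sg_sq g_def in auto)
  also have "\<dots> = prod (\<lambda>p. if p = pos x r then -1 else 1) {p\<in>Pi x. f p = p}"
  proof (rule prod.cong[OF refl])
    fix p assume p: "p \<in> {p\<in>Pi x. f p = p}"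
    then have pP: "p \<in> Pi x" and fp: "f p = p" by auto
    have pR: "p \<in> R" using Pi_R[OF pP] .
    show "g p = (if p = pos x r then -1 else 1)"
    proof (cases "s r p = - p")
      case True
      then have "p = r \<or> p = - r" using s_minus_eq[OF r pR] by blast
      then have "p = pos x r" using pP neg_Pi[OF reg r] unfolding pos_def by auto
      moreover have "- p \<notin> Pi x" using neg_Pi[OF reg pR] pP by simp
      ultimately show ?thesis unfolding g_def sg_def using True by simp
    next
      case False
      then have "s r p = p" using fp unfolding f_def pos_def by (auto split: if_splits dest: neg_swap)
      moreover have "p \<noteq> pos x r"
      proof
        assume "p = pos x r"
        then have "p = r \<or> p = - r" unfolding pos_def by (auto split: if_splits)
        then have "s r p = - p" using s_self[OF r] s_neg[OF r] s_addv[OF r] addv_neg by metis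
        then show False using False by simp
      qed
      ultimately show ?thesis unfolding g_def sg_def using pP by simp
    qed
  qed
  also have "\<dots> = -1"
  proof -
    have r0: "pos x r \<in> Pi x" using pos_Pi[OF reg r] .
    have "s r (pos x r) = - pos x r"
      unfolding pos_def using s_self[OF r] s_neg[OF r] s_addv[OF r] addv_neg by (metis (full_types))
    then have "f (pos x r) = pos x r"
      unfolding f_def using neg_Pi[OF reg Pi_R[OF pos_Pi[OF reg r]]] r0 Pi_R unfolding pos_def by auto
    then have "pos x r \<in> {p\<in>Pi x. f p = p}" using r0 by simp
    moreover have "finite {p\<in>Pi x. f p = p}" using Pi_fin by simp
    ultimately show ?thesis by (simp add: prod.delta')
  qed
  finally show ?thesis unfolding eps_def g_def .
qed

end


context rsys
begin

lemma eps_det: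
  assumes reg: "\<forall>p\<in>R. n p x \<noteq> 0" and w: "w \<in> W"
  shows "of_int (eps x w) = det (qmat w)"
  using w unfolding W_def
proof (induction rule: gg_induct)
  case id
  then show ?case by (simp only: eps_id qmat_id det_I of_int_1)
next
  case (base f)
  then obtain r where r: "r \<in> R" "f = s r" by blast
  then show ?case using eps_s[OF reg r(1)] reflection_det[OF s_refl[OF r(1)]] by simp
next
  case (comp f g)
  have fW: "f \<in> W" and gW: "g \<in> W" using comp.hyps unfolding W_def by auto
  show ?case using comp.IH
    by (simp only: eps_mult[OF reg fW gW] qmat_comp[OF W_addv[OF fW] W_addv[OF gW]] det_mul of_int_mult)
next
  case (inv f)
  have fW: "f \<in> W" using inv.hyps unfolding W_def by auto
  have ifW: "inv f \<in> W" using W_inv[OF fW] .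
  have c: "inv f \<circ> f = id" using W_bij[OF fW] by (simp add: bij_is_inj)
  have 1: "eps x (inv f) * eps x f = 1" using eps_mult[OF reg ifW fW] c eps_id by simp
  have 2: "det (qmat (inv f)) * det (qmat f) = 1"
    using qmat_comp[OF W_addv[OF ifW] W_addv[OF fW]] c qmat_id det_mul det_I by metis
  have 3: "det (qmat f) \<noteq> 0" using 2 by auto
  have "of_int (eps x (inv f)) * det (qmat f) = det (qmat (inv f)) * det (qmat f)"
    using 1 2 inv.IH by (metis of_int_1 of_int_mult)
  then show ?case using 3 by simp
qed

lemma refl_in_W:
  assumes tW: "t \<in> W" and tr: "reflection t"
  shows "\<exists>r\<in>R. t = s r"
proof -
  obtain p q where pq: "dotq p q = -2" and tf: "\<And>y. toQ (t y) = toQ y + dotq p (toQ y) *s q"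
    using reflection_form[OF tr] by blast
  have at: "addv t" using reflection_addv[OF tr] .
  have tt: "t (t y) = y" for y using reflection_invol[OF tr] by (metis comp_apply id_apply)
  show ?thesis
  proof (cases "\<exists>r\<in>R. \<forall>y. t y = y \<longrightarrow> n r y = 0")
    case True
    then obtain r where r: "r \<in> R" and rfix: "\<And>y. t y = y \<Longrightarrow> n r y = 0" by blast
    have hr: "hom_Z (n r)" using hom[OF r] .
    define \<nu> where "\<nu> = bv (n r)"
    define \<phi> where "\<phi> y = dotq p (toQ y)" for y
    define lam where "lam = - dotq \<nu> q / 2"
    have nv: "of_int (n r y) = dotq \<nu> (toQ y)" for y unfolding \<nu>_def using hom_Z_bv[OF hr] .
    have nt: "n r (t y) = - n r y" for y
    proof -
      have "t (y + t y) = y + t y" by (simp add: addv_add[OF at] tt add.commute)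
      then have "n r (y + t y) = 0" using rfix by blast
      then show ?thesis by (simp add: hom_Z_add[OF hr])
    qed
    have nlam: "of_int (n r y) = lam * \<phi> y" for y
    proof -
      have "- dotq \<nu> (toQ y) = dotq \<nu> (toQ y) + \<phi> y * dotq \<nu> q"
        using nt[of y] nv[of y] nv[of "t y"] tf[of y] unfolding \<phi>_def by simp
      then show ?thesis unfolding lam_def nv by (simp add: field_simps)
    qed
    have lr: "lam * \<phi> r = -2" using nlam[of r] nrr[OF r] by simp
    define g where "g = t \<circ> s r"
    have gW: "g \<in> W" unfolding g_def using W_comp[OF tW W_s[OF r]] .
    have ag: "addv g" unfolding g_def using addv_comp[OF at s_addv[OF r]] .
    have gf: "toQ (g z - z) = \<phi> z *s (lam *s toQ r - q)" for z
    proof -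
      have "toQ (g z) = toQ (s r z) + \<phi> (s r z) *s q" unfolding g_def \<phi>_def by (simp add: tf)
      also have "\<dots> = toQ z + of_int (n r z) *s toQ r + (\<phi> z + of_int (n r z) * \<phi> r) *s q"
        unfolding \<phi>_def by (simp add: s_apply)
      also have "\<dots> = toQ z + \<phi> z *s (lam *s toQ r - q)"
      proof -
        have "of_int (n r z) * \<phi> r = \<phi> z * (lam * \<phi> r)" by (simp add: nlam ac_simps)
        then have hz: "\<phi> z + of_int (n r z) * \<phi> r = - \<phi> z" using lr by simp
        show ?thesis unfolding hz by (simp add: nlam vec_eq_iff algebra_simps)
      qed
      finally show ?thesis by simp
    qed
    have "g (g z - z) = g z - z" for z
    proof -
      define d where "d = g z - z"
      have "\<phi> d = dotq p (toQ (g z - z))" unfolding \<phi>_def d_def ..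
      also have "\<dots> = dotq p (\<phi> z *s (lam *s toQ r - q))" by (simp only: gf)
      also have "\<dots> = \<phi> z * (lam * \<phi> r - dotq p q)"
        by (simp only: dotq_smult dotq_diff) (simp add: \<phi>_def)
      finally have "\<phi> d = \<phi> z * (lam * \<phi> r - dotq p q)" .
      then have "\<phi> d = 0" using lr pq by simp
      then have "toQ (g d - d) = 0" using gf[of d] by simp
      then show ?thesis unfolding d_def by (simp add: toQ_inj[symmetric])
    qed
    then have "g = id" using transvection[OF W_finite W_id W_closed gW ag] by blast
    then have "t = s r"
      unfolding g_def using s_invol[OF r] by (metis comp_apply id_apply ext)
    then show ?thesis using r by blast
  next
    case False
    then have ex: "\<And>r. r \<in> R \<Longrightarrow> \<exists>y\<in>{y. t y = y}. n r y \<noteq> 0" by blast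
    obtain x where x: "t x = x" and reg: "\<forall>p\<in>R. n p x \<noteq> 0"
    proof -
      have "\<exists>x\<in>{y. t y = y}. \<forall>a\<in>R. n a x \<noteq> 0"
      proof (rule find_regular[OF finR])
        show "0 \<in> {y. t y = y}" using addv_0[OF at] by simp
        show "\<And>x y. x \<in> {y. t y = y} \<Longrightarrow> y \<in> {y. t y = y} \<Longrightarrow> x + y \<in> {y. t y = y}"
          by (simp add: addv_add[OF at])
        show "\<And>x c. x \<in> {y. t y = y} \<Longrightarrow> c *s x \<in> {y. t y = y}"
          by (simp add: addv_smult[OF at])
        show "\<And>a. a \<in> R \<Longrightarrow> hom_Z (n a)" using hom .
        show "\<And>a. a \<in> R \<Longrightarrow> \<exists>y\<in>{y. t y = y}. n a y \<noteq> 0" using ex .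
      qed
      then show ?thesis using that by blast
    qed
    have itx: "inv t x = x" using W_inv_l[OF tW, of x] x by simp
    have "eps x t = 1"
      unfolding eps_def
    proof (rule prod.neutral, rule ballI)
      fix p assume p: "p \<in> Pi x"
      have "t p \<in> R" using W_R[OF tW Pi_R[OF p]] .
      moreover have "n (t p) x = n p x" using eqv[OF tW Pi_R[OF p]] itx by simp
      ultimately have "t p \<in> Pi x" using p unfolding Pi_def by simp
      then show "sg x (t p) = 1" unfolding sg_def by simp
    qed
    then have "det (qmat t) = 1" using eps_det[OF reg tW] by simp
    then show ?thesis using reflection_det[OF tr] by simp
  qed
qed

end


context rsys
begin

definition mm :: "('n lat \<Rightarrow> 'n lat) \<Rightarrow> ('n lat \<times> 'n dual) set" where
  "mm \<sigma> = (if \<sigma> \<in> W \<and> reflection \<sigma> then (\<Union>r\<in>{r\<in>R. s r = \<sigma>}. pm r (n r)) else {})"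

lemma rs_to_mrs_eq: "rs_to_mrs (R, n) = (W, mm)"
proof -
  have 1: "s = (\<lambda>r. root_refl r (n r))" by (rule ext) (simp add: s_def)
  have 2: "mm = (\<lambda>\<sigma>. if \<sigma> \<in> W \<and> reflection \<sigma> then (\<Union>r\<in>{r\<in>R. s r = \<sigma>}. pm r (n r)) else {})"
    by (rule ext) (simp add: mm_def)
  show ?thesis by (simp only: rs_to_mrs_def Let_def fst_conv snd_conv W_def 2 1)
qed

lemma roots_of: assumes r0: "r0 \<in> R" shows "{r\<in>R. s r = s r0} = {r0, - r0}"
proof
  show "{r\<in>R. s r = s r0} \<subseteq> {r0, - r0}"
  proof
    fix x assume "x \<in> {r\<in>R. s r = s r0}"
    then have x: "x \<in> R" "s r0 = s x" by auto
    then show "x \<in> {r0, - r0}" using s_eq[OF r0 x(1) x(2)] by blast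
  qed
  show "{r0, - r0} \<subseteq> {r\<in>R. s r = s r0}" using neg_R[OF r0] s_neg[OF r0] r0 by auto
qed

lemma pm_neg: "pm (- b) (\<lambda>x. - \<beta> x) = pm b \<beta>"
  unfolding pm_def by auto

lemma mm_s: assumes r0: "r0 \<in> R" shows "mm (s r0) = pm r0 (n r0)"
proof -
  have "mm (s r0) = (\<Union>r\<in>{r0, - r0}. pm r (n r))"
    unfolding mm_def using W_s[OF r0] s_refl[OF r0] roots_of[OF r0] by simp
  also have "\<dots> = pm r0 (n r0)" using pm_neg[of r0 "n r0"] by (simp add: n_neg[OF r0])
  finally show ?thesis .
qed

lemma mm_mem: "(b, \<beta>) \<in> mm \<sigma> \<longleftrightarrow> b \<in> R \<and> \<beta> = n b \<and> \<sigma> = s b"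
proof
  assume h: "(b, \<beta>) \<in> mm \<sigma>"
  then have "\<sigma> \<in> W \<and> reflection \<sigma>" unfolding mm_def by (auto split: if_splits)
  then obtain r0 where r0: "r0 \<in> R" "\<sigma> = s r0" using refl_in_W by blast
  then have "(b, \<beta>) \<in> pm r0 (n r0)" using h mm_s by simp
  then have "(b = r0 \<and> \<beta> = n r0) \<or> (b = - r0 \<and> \<beta> = (\<lambda>x. - n r0 x))" unfolding pm_def by auto
  then show "b \<in> R \<and> \<beta> = n b \<and> \<sigma> = s b"
    using r0 neg_R[OF r0(1)] n_neg[OF r0(1)] s_neg[OF r0(1)] by auto
next
  assume "b \<in> R \<and> \<beta> = n b \<and> \<sigma> = s b"
  then show "(b, \<beta>) \<in> mm \<sigma>" using mm_s unfolding pm_def by auto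
qed

lemma W_gen: "W = gen_group {\<sigma>\<in>W. reflection \<sigma>}"
proof
  show "W \<subseteq> gen_group {\<sigma>\<in>W. reflection \<sigma>}"
    unfolding W_def[of] by (rule gg_mono) (use W_s s_refl W_def in auto)
  show "gen_group {\<sigma>\<in>W. reflection \<sigma>} \<subseteq> W"
    by (rule gg_minimal) (use W_id W_comp W_inv in auto)
qed

lemma mrs: "marked_reflection_structure W mm"
  unfolding marked_reflection_structure_def
proof (intro conjI allI ballI impI)
  show "finite W" using W_finite .
  show "is_subgroup_Aut W" unfolding is_subgroup_Aut_def using W_Aut W_id W_comp W_inv by blast
  show "W = gen_group {\<sigma>\<in>W. reflection \<sigma>}" using W_gen .
next
  fix \<sigma> assume h: "\<sigma> \<in> W \<and> reflection \<sigma>"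
  then obtain r0 where r0: "r0 \<in> R" "\<sigma> = s r0" using refl_in_W by blast
  have "strict_marking \<sigma> r0 (n r0)" unfolding strict_marking_def using hom[OF r0(1)] r0(2) s_apply by simp
  then show "is_marking \<sigma> (mm \<sigma>)" unfolding is_marking_def using mm_s r0 by auto
next
  fix \<sigma> assume "\<not> (\<sigma> \<in> W \<and> reflection \<sigma>)"
  then show "mm \<sigma> = {}" unfolding mm_def by auto
next
  fix w \<sigma> assume w: "w \<in> W" and \<sigma>: "\<sigma> \<in> W" and r: "reflection \<sigma>"
  then obtain r0 where r0: "r0 \<in> R" "\<sigma> = s r0" using refl_in_W by blast
  have wr: "w r0 \<in> R" using W_R[OF w r0(1)] .
  have "w \<circ> \<sigma> \<circ> inv w = s (w r0)" using eqv_s[OF w r0(1)] r0(2) by simp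
  then have "mm (w \<circ> \<sigma> \<circ> inv w) = pm (w r0) (n (w r0))" using mm_s[OF wr] by simp
  moreover have "n (w r0) = n r0 \<circ> inv w" using eqv[OF w r0(1)] by (auto simp: fun_eq_iff)
  moreover have "act_marking w (mm \<sigma>) = pm (w r0) (n r0 \<circ> inv w)"
    unfolding r0(2) mm_s[OF r0(1)] act_marking_def pm_def using W_neg[OF w]
    by (auto simp: comp_def)
  ultimately show "act_marking w (mm \<sigma>) = mm (w \<circ> \<sigma> \<circ> inv w)" by simp
qed

end

lemma rs_inj:
  assumes A: "root_system R n" and B: "root_system R' n'"
    and e: "rs_to_mrs (R, n) = rs_to_mrs (R', n')"
  shows "R = R' \<and> n = n'"
proof -
  interpret A: rsys R n using A by unfold_locales
  interpret B: rsys R' n' using B by unfold_locales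
  have mm: "A.mm = B.mm" using e A.rs_to_mrs_eq B.rs_to_mrs_eq by simp
  have RR: "R = R'"
  proof -
    have "R = {b. \<exists>\<sigma> \<beta>. (b, \<beta>) \<in> A.mm \<sigma>}" using A.mm_mem by auto
    also have "\<dots> = {b. \<exists>\<sigma> \<beta>. (b, \<beta>) \<in> B.mm \<sigma>}" using mm by simp
    also have "\<dots> = R'" using B.mm_mem by auto
    finally show ?thesis .
  qed
  have "n b = n' b" for b
  proof (cases "b \<in> R")
    case True
    then have "(b, n b) \<in> A.mm (A.s b)" using A.mm_mem by simp
    then have "(b, n b) \<in> B.mm (A.s b)" using mm by simp
    then show ?thesis using B.mm_mem by simp
  next
    case False
    then show ?thesis using A.off B.off RR by simp
  qed
  then show ?thesis using RR by auto
qed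


locale mrsys =
  fixes W :: "(('n::finite) lat \<Rightarrow> 'n lat) set" and m :: "('n lat \<Rightarrow> 'n lat) \<Rightarrow> ('n lat \<times> 'n dual) set"
  assumes mrs: "marked_reflection_structure W m"
begin

lemma finW: "finite W" using mrs unfolding marked_reflection_structure_def by blast
lemma W_Aut: "f \<in> W \<Longrightarrow> f \<in> Aut" using mrs unfolding marked_reflection_structure_def is_subgroup_Aut_def by blast
lemma W_id: "id \<in> W" using mrs unfolding marked_reflection_structure_def is_subgroup_Aut_def by blast
lemma W_comp: "f \<in> W \<Longrightarrow> g \<in> W \<Longrightarrow> f \<circ> g \<in> W" using mrs unfolding marked_reflection_structure_def is_subgroup_Aut_def by blast
lemma W_inv: "f \<in> W \<Longrightarrow> inv f \<in> W" using mrs unfolding marked_reflection_structure_def is_subgroup_Aut_def by blast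
lemma W_gen: "W = gen_group {\<sigma>\<in>W. reflection \<sigma>}" using mrs unfolding marked_reflection_structure_def by blast
lemma mark: "\<sigma> \<in> W \<Longrightarrow> reflection \<sigma> \<Longrightarrow> is_marking \<sigma> (m \<sigma>)" using mrs unfolding marked_reflection_structure_def by blast
lemma m_empty: "\<not> (\<sigma> \<in> W \<and> reflection \<sigma>) \<Longrightarrow> m \<sigma> = {}" using mrs unfolding marked_reflection_structure_def by blast
lemma m_equiv: "w \<in> W \<Longrightarrow> \<sigma> \<in> W \<Longrightarrow> reflection \<sigma> \<Longrightarrow> act_marking w (m \<sigma>) = m (w \<circ> \<sigma> \<circ> inv w)"
  using mrs unfolding marked_reflection_structure_def by blast

lemma W_addv: "f \<in> W \<Longrightarrow> addv f" using W_Aut Aut_addv by blast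
lemma W_bij: "f \<in> W \<Longrightarrow> bij f" using W_Aut Aut_bij by blast
lemma W_closed: "\<forall>f\<in>W. \<forall>g\<in>W. f \<circ> g \<in> W" using W_comp by blast
lemma W_inv_r: "f \<in> W \<Longrightarrow> f (inv f x) = x" using W_bij by (meson bij_inv_eq_iff)
lemma W_inv_l: "f \<in> W \<Longrightarrow> inv f (f x) = x" using W_bij by (meson bij_is_inj inv_f_f)

lemma m_refl: "(b, \<beta>) \<in> m \<sigma> \<Longrightarrow> \<sigma> \<in> W \<and> reflection \<sigma>"
  using m_empty by fastforce

lemma m_pm: assumes "\<sigma> \<in> W" "reflection \<sigma>"
  obtains b0 \<beta>0 where "strict_marking \<sigma> b0 \<beta>0" "m \<sigma> = pm b0 \<beta>0"
  using mark[OF assms] unfolding is_marking_def by blast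

lemma strict_neg: "strict_marking \<sigma> b \<beta> \<Longrightarrow> strict_marking \<sigma> (- b) (\<lambda>x. - \<beta> x)"
  unfolding strict_marking_def using hom_Z_uminus by (auto simp: vec_eq_iff)

lemma m_strict: assumes "(b, \<beta>) \<in> m \<sigma>" shows "strict_marking \<sigma> b \<beta>"
proof -
  have "\<sigma> \<in> W" "reflection \<sigma>" using m_refl[OF assms] by auto
  then obtain b0 \<beta>0 where h: "strict_marking \<sigma> b0 \<beta>0" "m \<sigma> = pm b0 \<beta>0" by (rule m_pm)
  then have "(b, \<beta>) = (b0, \<beta>0) \<or> (b, \<beta>) = (- b0, \<lambda>x. - \<beta>0 x)" using assms unfolding pm_def by auto
  then show ?thesis using h(1) strict_neg by auto
qed

lemma m_hom: "(b, \<beta>) \<in> m \<sigma> \<Longrightarrow> hom_Z \<beta>" using m_strict unfolding strict_marking_def by blast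
lemma m_form: "(b, \<beta>) \<in> m \<sigma> \<Longrightarrow> \<sigma> x = x + \<beta> x *s b" using m_strict unfolding strict_marking_def by blast

lemma m_b: assumes h: "(b, \<beta>) \<in> m \<sigma>" shows "b \<noteq> 0" "\<beta> b = -2"
proof -
  have r: "reflection \<sigma>" using m_refl[OF h] by blast
  have hb: "hom_Z \<beta>" using m_hom[OF h] .
  have ne: "\<sigma> \<noteq> id" using reflection_ne_id[OF r] .
  then obtain x0 where x0: "\<sigma> x0 \<noteq> x0" by (auto simp: fun_eq_iff)
  then have bx: "\<beta> x0 *s b \<noteq> 0" using m_form[OF h, of x0] by auto
  then show "b \<noteq> 0" by auto
  have inv: "\<sigma> (\<sigma> x0) = x0" using reflection_invol[OF r] by (metis comp_apply id_apply)
  have e1: "\<sigma> (\<sigma> x0) = \<sigma> x0 + \<beta> (\<sigma> x0) *s b" by (rule m_form[OF h])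
  have e2: "\<beta> (\<sigma> x0) = \<beta> x0 + \<beta> x0 * \<beta> b"
    by (simp only: m_form[OF h, of x0] hom_Z_add[OF hb] hom_Z_smult[OF hb])
  have "\<sigma> (\<sigma> x0) = \<sigma> x0 + (\<beta> x0 + \<beta> x0 * \<beta> b) *s b" by (simp only: e1 e2)
  also have "\<dots> = x0 + ((2 + \<beta> b) * \<beta> x0) *s b"
    by (simp only: m_form[OF h, of x0]) (simp add: vec_eq_iff algebra_simps)
  finally have "\<sigma> (\<sigma> x0) = x0 + ((2 + \<beta> b) * \<beta> x0) *s b" .
  then have "((2 + \<beta> b) * \<beta> x0) *s b = 0" using inv by simp
  then show "\<beta> b = -2" using bx by (auto simp: vec_eq_iff)
qed

lemma m_unique:
  assumes h1: "(b, \<beta>) \<in> m \<sigma>" and h2: "(k *s b, \<beta>') \<in> m \<sigma>'"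
  shows "\<sigma> = \<sigma>'"
proof -
  have \<sigma>W: "\<sigma> \<in> W" and \<sigma>'W: "\<sigma>' \<in> W" using m_refl h1 h2 by auto
  have hb: "hom_Z \<beta>" and hb': "hom_Z \<beta>'" using m_hom h1 h2 by auto
  have bb: "\<beta> b = -2" using m_b[OF h1] by simp
  have kb: "k * \<beta>' b = -2" using m_b(2)[OF h2] hom_Z_smult[OF hb'] by simp
  define g where "g = \<sigma> \<circ> \<sigma>'"
  have gW: "g \<in> W" unfolding g_def using W_comp \<sigma>W \<sigma>'W by blast
  have ag: "addv g" using W_addv[OF gW] .
  have gf: "g x = x + (\<beta> x - k * \<beta>' x) *s b" for x
  proof -
    have e1: "g x = \<sigma>' x + \<beta> (\<sigma>' x) *s b" unfolding g_def using m_form[OF h1] by simp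
    have e2: "\<beta> (\<sigma>' x) = \<beta> x + \<beta>' x * (k * \<beta> b)"
      by (simp only: m_form[OF h2, of x] hom_Z_add[OF hb] hom_Z_smult[OF hb])
    have "g x = \<sigma>' x + (\<beta> x + \<beta>' x * (k * \<beta> b)) *s b" by (simp only: e1 e2)
    also have "\<dots> = x + (\<beta> x - k * \<beta>' x) *s b"
      by (simp only: m_form[OF h2, of x] bb) (simp add: vec_eq_iff algebra_simps)
    finally show ?thesis .
  qed
  have "g (g x - x) = g x - x" for x
  proof -
    define c where "c = \<beta> x - k * \<beta>' x"
    have e: "g x - x = c *s b" unfolding c_def gf by simp
    have "g (c *s b) = c *s b + (c * \<beta> b - k * (c * \<beta>' b)) *s b"
      using gf[of "c *s b"] by (simp add: hom_Z_smult[OF hb] hom_Z_smult[OF hb'])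
    also have "c * \<beta> b - k * (c * \<beta>' b) = c * (\<beta> b - k * \<beta>' b)" by (simp add: algebra_simps)
    also have "\<dots> = 0" using bb kb by simp
    finally show ?thesis using e by simp
  qed
  then have "g = id" using transvection[OF finW W_id W_closed gW ag] by blast
  then have "\<sigma> \<circ> \<sigma>' = id" unfolding g_def .
  moreover have "\<sigma>' \<circ> \<sigma>' = id" using reflection_invol m_refl[OF h2] by blast
  ultimately show ?thesis by (metis comp_assoc comp_id)
qed

lemma m_same:
  assumes h1: "(b, \<beta>) \<in> m \<sigma>" and h2: "(b', \<beta>') \<in> m \<sigma>"
  shows "(b' = b \<and> \<beta>' = \<beta>) \<or> (b' = - b \<and> \<beta>' = (\<lambda>x. - \<beta> x))"
proof -
  have "\<sigma> \<in> W" "reflection \<sigma>" using m_refl[OF h1] by auto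
  then obtain b0 \<beta>0 where h: "strict_marking \<sigma> b0 \<beta>0" "m \<sigma> = pm b0 \<beta>0" by (rule m_pm)
  have "b0 \<noteq> 0" using m_b(1)[of b0 \<beta>0 \<sigma>] h(2) unfolding pm_def by auto
  then have "b0 \<noteq> - b0" by (auto simp: vec_eq_iff)
  then show ?thesis using h1 h2 h(2) unfolding pm_def by auto
qed

definition RR :: "'n lat set" where "RR = {b. \<exists>\<sigma> \<beta>. (b, \<beta>) \<in> m \<sigma>}"
definition nn :: "'n lat \<Rightarrow> 'n dual" where
  "nn b = (if b \<in> RR then (SOME \<beta>. \<exists>\<sigma>. (b, \<beta>) \<in> m \<sigma>) else (\<lambda>_. 0))"

lemma nn_eq: assumes h: "(b, \<beta>) \<in> m \<sigma>" shows "nn b = \<beta>"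
proof -
  have bR: "b \<in> RR" unfolding RR_def using h by blast
  have ex: "\<exists>\<beta>. \<exists>\<sigma>. (b, \<beta>) \<in> m \<sigma>" using h by blast
  have "\<exists>\<sigma>. (b, SOME \<beta>. \<exists>\<sigma>. (b, \<beta>) \<in> m \<sigma>) \<in> m \<sigma>" using someI_ex[OF ex] .
  then have "\<exists>\<sigma>. (b, nn b) \<in> m \<sigma>" unfolding nn_def using bR by simp
  then obtain \<sigma>' where h': "(b, nn b) \<in> m \<sigma>'" by blast
  have "\<sigma>' = \<sigma>" using m_unique[OF h', of 1] h by simp
  then have h'': "(b, nn b) \<in> m \<sigma>" using h' by simp
  have "(b = b \<and> nn b = \<beta>) \<or> (b = - b \<and> nn b = (\<lambda>x. - \<beta> x))" using m_same[OF h h''] .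
  moreover have "b \<noteq> - b" using m_b(1)[OF h] by (auto simp: vec_eq_iff)
  ultimately show ?thesis by blast
qed

lemma RR_mem: "b \<in> RR \<longleftrightarrow> (\<exists>\<sigma>. (b, nn b) \<in> m \<sigma>)"
  unfolding RR_def using nn_eq by blast

end


lemma pm_neg': "pm (- b) (\<lambda>x. - \<beta> x) = pm b \<beta>"
  unfolding pm_def by auto

context mrsys
begin

lemma rr_eq: assumes h: "(b, \<beta>) \<in> m \<sigma>" shows "root_refl b (nn b) = \<sigma>"
  by (rule ext) (simp add: root_refl_def nn_eq[OF h] m_form[OF h])

lemma m_finite: "finite (m \<sigma>)"
proof (cases "\<sigma> \<in> W \<and> reflection \<sigma>")
  case True
  then obtain b0 \<beta>0 where "m \<sigma> = pm b0 \<beta>0" using m_pm by blast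
  then show ?thesis unfolding pm_def by simp
next
  case False
  then show ?thesis using m_empty by simp
qed

lemma RR_finite: "finite RR"
proof -
  have "RR \<subseteq> (\<Union>\<sigma>\<in>W. fst ` m \<sigma>)"
    unfolding RR_def using m_refl by force
  moreover have "finite (\<Union>\<sigma>\<in>W. fst ` m \<sigma>)" using finW m_finite by simp
  ultimately show ?thesis using finite_subset by blast
qed

lemma disp: assumes u: "u \<in> W" shows "toQ (x - u x) \<in> vec.span (toQ ` RR)"
proof -
  have "u \<in> gen_group {\<sigma>\<in>W. reflection \<sigma>}" using u W_gen by simp
  then have "\<forall>x. toQ (x - u x) \<in> vec.span (toQ ` RR)"
  proof (induction rule: gg_induct)
    case id
    then show ?case by (simp add: vec.span_zero)
  next
    case (base \<sigma>)
    then have \<sigma>: "\<sigma> \<in> W" "reflection \<sigma>" by auto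
    obtain b0 \<beta>0 where h: "strict_marking \<sigma> b0 \<beta>0" "m \<sigma> = pm b0 \<beta>0" using m_pm[OF \<sigma>] by blast
    have mem: "(b0, \<beta>0) \<in> m \<sigma>" using h(2) unfolding pm_def by simp
    have bR: "b0 \<in> RR" unfolding RR_def using mem by blast
    show ?case
    proof
      fix x
      have "x - \<sigma> x = (- \<beta>0 x) *s b0" using m_form[OF mem, of x] by (simp add: vec_eq_iff)
      then have "toQ (x - \<sigma> x) = of_int (- \<beta>0 x) *s toQ b0" by (simp only: toQ_smult)
      moreover have "of_int (- \<beta>0 x) *s toQ b0 \<in> vec.span (toQ ` RR)"
        using bR by (intro vec.span_scale vec.span_base) blast
      ultimately show "toQ (x - \<sigma> x) \<in> vec.span (toQ ` RR)" by simp
    qed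
  next
    case (comp f g)
    show ?case
    proof
      fix x
      have "x - (f \<circ> g) x = (x - g x) + (g x - f (g x))" by simp
      then show "toQ (x - (f \<circ> g) x) \<in> vec.span (toQ ` RR)"
        using comp.IH by (metis toQ_add vec.span_add)
    qed
  next
    case (inv f)
    have fW: "f \<in> W" using inv.hyps W_gen by simp
    show ?case
    proof
      fix x
      have "x - inv f x = - (inv f x - f (inv f x))" using W_inv_r[OF fW] by simp
      then show "toQ (x - inv f x) \<in> vec.span (toQ ` RR)"
        using inv.IH by (metis toQ_neg vec.span_neg)
    qed
  qed
  then show ?thesis by blast
qed

lemma avg_fixed: assumes u: "u \<in> W" shows "u (\<Sum>w\<in>W. w x) = (\<Sum>w\<in>W. w x)"
proof -
  have "u (\<Sum>w\<in>W. w x) = (\<Sum>w\<in>W. (u \<circ> w) x)" using addv_sum[OF W_addv[OF u]] by simp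
  also have "\<dots> = (\<Sum>w\<in>W. w x)"
  proof (rule sum.reindex_bij_betw)
    have sub: "(\<lambda>w. u \<circ> w) ` W \<subseteq> W" using W_comp[OF u] by blast
    have inj: "inj_on (\<lambda>w. u \<circ> w) W"
    proof (rule inj_onI)
      fix v w assume "u \<circ> v = u \<circ> w"
      then have "inv u \<circ> (u \<circ> v) = inv u \<circ> (u \<circ> w)" by simp
      then show "v = w" using W_bij[OF u] by (simp add: comp_assoc[symmetric] bij_is_inj)
    qed
    show "bij_betw (\<lambda>w. u \<circ> w) W W" unfolding bij_betw_def using inj endo_inj_surj[OF finW sub inj] by blast
  qed
  finally show ?thesis .
qed

lemma avg_K: "(\<Sum>w\<in>W. w x) \<in> (\<Inter>r\<in>RR. {y. nn r y = 0})"
proof (rule INT_I, rule CollectI)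
  fix r assume "r \<in> RR"
  then obtain \<sigma> where h: "(r, nn r) \<in> m \<sigma>" using RR_mem by blast
  have \<sigma>W: "\<sigma> \<in> W" using m_refl[OF h] by blast
  have "\<sigma> (\<Sum>w\<in>W. w x) = (\<Sum>w\<in>W. w x)" using avg_fixed[OF \<sigma>W] .
  then have "nn r (\<Sum>w\<in>W. w x) *s r = 0" using m_form[OF h, of "\<Sum>w\<in>W. w x"] by simp
  then show "nn r (\<Sum>w\<in>W. w x) = 0" using m_b(1)[OF h] by (auto simp: vec_eq_iff)
qed

lemma RR_span: "vec.span (toQ ` (RR \<union> (\<Inter>r\<in>RR. {y. nn r y = 0}))) = UNIV"
proof -
  let ?S = "vec.span (toQ ` (RR \<union> (\<Inter>r\<in>RR. {y. nn r y = 0})))"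
  have lat: "toQ x \<in> ?S" for x
  proof -
    define a where "a = (\<Sum>w\<in>W. w x)"
    have cW: "card W > 0" using finW W_id card_gt_0_iff by blast
    have e: "int (card W) *s x = a + (\<Sum>w\<in>W. x - w x)"
      unfolding a_def vec_eq_iff
      by (simp only: vector_add_component vector_smult_component sum_component vector_minus_component)
         (simp add: sum_subtractf)
    have 1: "toQ a \<in> ?S" using avg_K unfolding a_def by (intro vec.span_base) blast
    have "(\<Sum>w\<in>W. toQ (x - w x)) \<in> vec.span (toQ ` RR)"
      using disp by (intro vec.span_sum) blast
    then have 2: "(\<Sum>w\<in>W. toQ (x - w x)) \<in> ?S"
      using vec.span_mono[of "toQ ` RR" "toQ ` (RR \<union> (\<Inter>r\<in>RR. {y. nn r y = 0}))"] by blast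
    have "toQ (int (card W) *s x) = toQ a + (\<Sum>w\<in>W. toQ (x - w x))"
      unfolding e by (simp only: toQ_add toQ_sum)
    moreover have "toQ (int (card W) *s x) = of_nat (card W) *s toQ x" by (simp only: toQ_smult of_int_of_nat_eq)
    ultimately have "of_nat (card W) *s toQ x \<in> ?S" using 1 2 vec.span_add by metis
    then have "(1 / of_nat (card W)) *s (of_nat (card W) *s toQ x) \<in> ?S" by (rule vec.span_scale)
    then show ?thesis using cW by (simp add: vec_eq_iff)
  qed
  have "v \<in> ?S" for v
  proof -
    have "v = (\<Sum>j\<in>UNIV. v $ j *s toQ (axis j 1))" by (simp add: basis_expansion)
    also have "\<dots> \<in> ?S" using lat by (intro vec.span_sum vec.span_scale) blast
    finally show ?thesis .
  qed
  then show ?thesis by blast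
qed

lemma RR_rs: "root_system RR nn"
  unfolding root_system_def
proof (intro conjI ballI allI impI)
  show "finite RR" using RR_finite .
  show "\<And>r. r \<in> RR \<Longrightarrow> hom_Z (nn r)" using RR_mem m_hom by blast
  show "\<And>r. r \<notin> RR \<Longrightarrow> nn r = (\<lambda>_. 0)" unfolding nn_def by simp
  show "vec.span (toQ ` (RR \<union> (\<Inter>r\<in>RR. {x. nn r x = 0}))) = UNIV" using RR_span .
  show "\<And>r. r \<in> RR \<Longrightarrow> nn r r = -2" using RR_mem m_b(2) by blast
next
  fix r k assume r: "r \<in> RR" and kr: "k *s r \<in> RR"
  obtain \<sigma> where h1: "(r, nn r) \<in> m \<sigma>" using r RR_mem by blast
  obtain \<sigma>' where h2: "(k *s r, nn (k *s r)) \<in> m \<sigma>'" using kr RR_mem by blast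
  have "\<sigma> = \<sigma>'" using m_unique[OF h1 h2] .
  then have disj: "k *s r = r \<or> k *s r = - r" using m_same[OF h1] h2 by blast
  obtain i where i: "r $ i \<noteq> 0" using m_b(1)[OF h1] by (auto simp: vec_eq_iff)
  show "k = 1 \<or> k = -1" using disj
  proof
    assume "k *s r = r" then have "k * r $ i = r $ i" by (metis vector_smult_component)
    then show ?thesis using i by simp
  next
    assume "k *s r = - r" then have "k * r $ i = - r $ i" by (metis vector_smult_component vector_uminus_component)
    then show ?thesis using i by (metis mult_cancel_right mult_minus_left mult_1 minus_mult_left)
  qed
next
  fix r t assume r: "r \<in> RR" and t: "t \<in> RR"
  obtain \<sigma> where h1: "(r, nn r) \<in> m \<sigma>" using r RR_mem by blast
  obtain \<tau> where h2: "(t, nn t) \<in> m \<tau>" using t RR_mem by blast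
  have \<sigma>: "\<sigma> \<in> W" and \<tau>: "\<tau> \<in> W" "reflection \<tau>" using m_refl h1 h2 by auto
  have "(\<sigma> t, nn t \<circ> inv \<sigma>) \<in> act_marking \<sigma> (m \<tau>)"
    unfolding act_marking_def using h2 by force
  then have "(\<sigma> t, nn t \<circ> inv \<sigma>) \<in> m (\<sigma> \<circ> \<tau> \<circ> inv \<sigma>)" using m_equiv[OF \<sigma> \<tau>] by simp
  then have "\<sigma> t \<in> RR" unfolding RR_def by blast
  then show "t + nn r t *s r \<in> RR" using m_form[OF h1, of t] nn_eq[OF h1] by simp
qed

lemma RR_refls: "(\<lambda>r. root_refl r (nn r)) ` RR = {\<sigma>\<in>W. reflection \<sigma>}"
proof
  show "(\<lambda>r. root_refl r (nn r)) ` RR \<subseteq> {\<sigma>\<in>W. reflection \<sigma>}"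
    using RR_mem rr_eq m_refl by force
  show "{\<sigma>\<in>W. reflection \<sigma>} \<subseteq> (\<lambda>r. root_refl r (nn r)) ` RR"
  proof
    fix \<sigma> assume "\<sigma> \<in> {\<sigma>\<in>W. reflection \<sigma>}"
    then have \<sigma>: "\<sigma> \<in> W" "reflection \<sigma>" by auto
    obtain b0 \<beta>0 where h: "strict_marking \<sigma> b0 \<beta>0" "m \<sigma> = pm b0 \<beta>0" using m_pm[OF \<sigma>] by blast
    have mem: "(b0, \<beta>0) \<in> m \<sigma>" using h(2) unfolding pm_def by simp
    have "b0 \<in> RR" unfolding RR_def using mem by blast
    then show "\<sigma> \<in> (\<lambda>r. root_refl r (nn r)) ` RR" using rr_eq[OF mem] by force
  qed
qed

lemma m_recover: assumes \<sigma>: "\<sigma> \<in> W" "reflection \<sigma>"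
  shows "(\<Union>r\<in>{r\<in>RR. root_refl r (nn r) = \<sigma>}. pm r (nn r)) = m \<sigma>"
proof -
  obtain b0 \<beta>0 where h: "strict_marking \<sigma> b0 \<beta>0" "m \<sigma> = pm b0 \<beta>0" using m_pm[OF \<sigma>] by blast
  have mem1: "(b0, \<beta>0) \<in> m \<sigma>" and mem2: "(- b0, \<lambda>x. - \<beta>0 x) \<in> m \<sigma>" using h(2) unfolding pm_def by auto
  have "{r\<in>RR. root_refl r (nn r) = \<sigma>} = {b0, - b0}"
  proof
    show "{r\<in>RR. root_refl r (nn r) = \<sigma>} \<subseteq> {b0, - b0}"
    proof
      fix r assume "r \<in> {r\<in>RR. root_refl r (nn r) = \<sigma>}"
      then have r: "r \<in> RR" "root_refl r (nn r) = \<sigma>" by auto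
      obtain \<tau> where h': "(r, nn r) \<in> m \<tau>" using r(1) RR_mem by blast
      have "\<tau> = \<sigma>" using rr_eq[OF h'] r(2) by simp
      then have "(r, nn r) \<in> pm b0 \<beta>0" using h' h(2) by simp
      then show "r \<in> {b0, - b0}" unfolding pm_def by auto
    qed
    show "{b0, - b0} \<subseteq> {r\<in>RR. root_refl r (nn r) = \<sigma>}"
      using mem1 mem2 rr_eq unfolding RR_def by blast
  qed
  then have "(\<Union>r\<in>{r\<in>RR. root_refl r (nn r) = \<sigma>}. pm r (nn r)) = pm b0 (nn b0) \<union> pm (- b0) (nn (- b0))"
    by simp
  also have "\<dots> = pm b0 \<beta>0" using nn_eq[OF mem1] nn_eq[OF mem2] pm_neg'[of b0 \<beta>0] by simp
  finally show ?thesis using h(2) by simp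
qed

lemma rs_to_mrs_RR: "rs_to_mrs (RR, nn) = (W, m)"
proof -
  have G: "gen_group ((\<lambda>r. root_refl r (nn r)) ` RR) = W" using RR_refls W_gen by simp
  have M: "(\<lambda>\<sigma>. if \<sigma> \<in> W \<and> reflection \<sigma> then (\<Union>r\<in>{r\<in>RR. root_refl r (nn r) = \<sigma>}. pm r (nn r)) else {}) = m"
    by (rule ext) (simp add: m_recover m_empty)
  show ?thesis by (simp only: rs_to_mrs_def Let_def fst_conv snd_conv G M)
qed

end

lemma img1:
  assumes "root_system R n"
  shows "rs_to_mrs (R, n) \<in> {(W, m). marked_reflection_structure W m}"
proof -
  interpret A: rsys R n using assms by unfold_locales
  show ?thesis using A.rs_to_mrs_eq A.mrs by simp
qed

lemma img2:
  assumes "marked_reflection_structure W m"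
  shows "(W, m) \<in> rs_to_mrs ` {(R, n). root_system R n}"
proof -
  interpret B: mrsys W m using assms by unfold_locales
  show ?thesis using B.RR_rs B.rs_to_mrs_RR by (metis (mono_tags, lifting) case_prodI image_eqI mem_Collect_eq)
qed

theorem proposition2p15:
  shows "bij_betw (rs_to_mrs :: ('n::finite) lat set \<times> ('n lat \<Rightarrow> 'n dual) \<Rightarrow> _)
           {(R, n). root_system R n}
           {(W, m). marked_reflection_structure W m}"
  unfolding bij_betw_def
proof
  show "inj_on (rs_to_mrs :: ('n::finite) lat set \<times> ('n lat \<Rightarrow> 'n dual) \<Rightarrow> _) {(R, n). root_system R n}"
  proof (rule inj_onI)
    fix a b :: "('n::finite) lat set \<times> ('n lat \<Rightarrow> 'n dual)"
    assume a: "a \<in> {(R, n). root_system R n}" and b: "b \<in> {(R, n). root_system R n}"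
      and e: "rs_to_mrs a = rs_to_mrs b"
    obtain R n where an: "a = (R, n)" by (cases a)
    obtain R' n' where bn: "b = (R', n')" by (cases b)
    show "a = b" using rs_inj[of R n R' n'] a b e unfolding an bn by simp
  qed
  show "(rs_to_mrs :: ('n::finite) lat set \<times> ('n lat \<Rightarrow> 'n dual) \<Rightarrow> _) ` {(R, n). root_system R n}
     = {(W, m). marked_reflection_structure W m}"
  proof
    show "(rs_to_mrs :: ('n::finite) lat set \<times> ('n lat \<Rightarrow> 'n dual) \<Rightarrow> _) ` {(R, n). root_system R n}
       \<subseteq> {(W, m). marked_reflection_structure W m}"
    proof
      fix y assume "y \<in> (rs_to_mrs :: ('n::finite) lat set \<times> ('n lat \<Rightarrow> 'n dual) \<Rightarrow> _) ` {(R, n). root_system R n}"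
      then obtain R :: "'n lat set" and n where h: "root_system R n" "y = rs_to_mrs (R, n)" by auto
      show "y \<in> {(W, m). marked_reflection_structure W m}" using img1[OF h(1)] h(2) by simp
    qed
    show "{(W, m). marked_reflection_structure W m}
       \<subseteq> (rs_to_mrs :: ('n::finite) lat set \<times> ('n lat \<Rightarrow> 'n dual) \<Rightarrow> _) ` {(R, n). root_system R n}"
    proof
      fix y :: "('n lat \<Rightarrow> 'n lat) set \<times> (('n lat \<Rightarrow> 'n lat) \<Rightarrow> ('n lat \<times> 'n dual) set)"
      assume "y \<in> {(W, m). marked_reflection_structure W m}"
      then obtain W m where h: "marked_reflection_structure W m" "y = (W, m)" by auto
      show "y \<in> rs_to_mrs ` {(R, n). root_system R n}" using img2[OF h(1)] h(2) by simp
    qed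
  qed
qed


end
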